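(* Let $a,b\geq0$ and $n$ be integers with $b+1\leq n$. The coefficient of the Schur function $s_{(a+1,1^b)}$ in the Schur expansion of the plethysm $s_{(1^n)}[1+h_1+h_2+\cdots]$ equals the number of pairs $(\lambda,\mu)$ with $\lambda=(\lambda_1\geq\cdots\geq\lambda_b\geq0)$, $\mu=(\mu_1>\cdots>\mu_{n-b}\geq0)$, $\sum_i\lambda_i+\sum_i\mu_i=a+1$, and $\mu_1>\lambda_1$ (the last condition vacuous when $b=0$).
   Context: $s_\nu$ denotes the Schur function and $h_i$ the complete homogeneous symmetric function of degree $i$. The plethysm $s_{(1^n)}[1+h_1+h_2+\cdots]$ is obtained by substituting the monomials occurring in $1+h_1+h_2+\cdots$ (with multiplicity) for the variables $x_1,x_2,\dotsc$ of $s_{(1^n)}=e_n(x_1,x_2,\dotsc)$. *)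

theory Defs
  imports Main
begin

text \<open>Symmetric functions in the countably many variables x_0, x_1, ... are represented
by their coefficient functions on exponent vectors (functions nat => nat of finite support).\<close>

definition fin_supp :: "(nat \<Rightarrow> nat) \<Rightarrow> bool" where
  "fin_supp \<alpha> \<longleftrightarrow> finite {i. \<alpha> i \<noteq> 0}"

definition deg :: "(nat \<Rightarrow> nat) \<Rightarrow> nat" where
  "deg \<gamma> = (\<Sum>i\<in>{i. \<gamma> i \<noteq> 0}. \<gamma> i)"

definition is_partition :: "nat list \<Rightarrow> bool" where
  "is_partition lam \<longleftrightarrow> sorted_wrt (\<ge>) lam \<and> (\<forall>x\<in>set lam. 0 < x)"

definition cells :: "nat list \<Rightarrow> (nat \<times> nat) set" where
  "cells lam = {(i, j). i < length lam \<and> j < lam ! i}"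

definition ssyt :: "nat list \<Rightarrow> (nat \<Rightarrow> nat) \<Rightarrow> (nat \<times> nat \<Rightarrow> nat) set" where
  "ssyt lam \<gamma> = {T. (\<forall>x. x \<notin> cells lam \<longrightarrow> T x = 0)
      \<and> (\<forall>i j. (i, j) \<in> cells lam \<longrightarrow> (i, Suc j) \<in> cells lam \<longrightarrow> T (i, j) \<le> T (i, Suc j))
      \<and> (\<forall>i j. (i, j) \<in> cells lam \<longrightarrow> (Suc i, j) \<in> cells lam \<longrightarrow> T (i, j) < T (Suc i, j))
      \<and> (\<forall>k. card {x \<in> cells lam. T x = k} = \<gamma> k)}"

text \<open>Kostka number = coefficient of x^gamma in the Schur function s_lambda.\<close>
definition kostka :: "nat list \<Rightarrow> (nat \<Rightarrow> nat) \<Rightarrow> nat" where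
  "kostka lam \<gamma> = card (ssyt lam \<gamma>)"

text \<open>c is a Schur expansion of f: f = sum over partitions lambda of c lambda * s_lambda.\<close>
definition schur_expansion :: "((nat \<Rightarrow> nat) \<Rightarrow> int) \<Rightarrow> (nat list \<Rightarrow> int) \<Rightarrow> bool" where
  "schur_expansion f c \<longleftrightarrow> (\<forall>\<gamma>. fin_supp \<gamma> \<longrightarrow>
      f \<gamma> = (\<Sum>lam\<in>{lam. is_partition lam \<and> sum_list lam = deg \<gamma>}. c lam * int (kostka lam \<gamma>)))"

definition schur_coeff :: "((nat \<Rightarrow> nat) \<Rightarrow> int) \<Rightarrow> nat list \<Rightarrow> int" where
  "schur_coeff f \<nu> = (THE x. \<exists>c. schur_expansion f c \<and> c \<nu> = x)"

text \<open>The plethysm e_n[1 + h_1 + h_2 + ...]: e_n evaluated at the family of all monomials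
  (each monomial, including 1, exactly once).\<close>
definition pleth_en :: "nat \<Rightarrow> (nat \<Rightarrow> nat) \<Rightarrow> int" where
  "pleth_en n \<gamma> = int (card {S. finite S \<and> card S = n \<and> (\<forall>\<alpha>\<in>S. fin_supp \<alpha>)
                                 \<and> (\<lambda>i. \<Sum>\<alpha>\<in>S. \<alpha> i) = \<gamma>})"

definition hook_pairs :: "nat \<Rightarrow> nat \<Rightarrow> nat \<Rightarrow> (nat list \<times> nat list) set" where
  "hook_pairs a b n = {(lam, mu). length lam = b \<and> sorted_wrt (\<ge>) lam
      \<and> length mu = n - b \<and> sorted_wrt (>) mu
      \<and> sum_list lam + sum_list mu = a + 1
      \<and> (b = 0 \<or> hd lam < hd mu)}"

end

theory Submission
  imports Defs "HOL-Library.Multiset"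
begin

definition at :: "nat list \<Rightarrow> nat \<Rightarrow> nat" where
  "at xs i = (if i < length xs then xs ! i else 0)"

lemma at_append_last: "at (xs @ [r]) i = (if i < length xs then xs ! i else if i = length xs then r else 0)"
  by (auto simp: at_def nth_append)

lemma cells_at: "cells lam = {(i, j). j < at lam i}"
  by (auto simp: cells_def at_def split: if_splits)

lemma mem_cells: "(i, j) \<in> cells lam \<longleftrightarrow> j < at lam i"
  by (simp add: cells_at)

lemma finite_cells: "finite (cells lam)"
proof -
  have "cells lam \<subseteq> {..<length lam} \<times> {..<sum_list lam}"
    by (auto simp: cells_def elem_le_sum_list less_le_trans)
  then show ?thesis by (rule finite_subset) auto
qed

lemma card_cells: "card (cells lam) = sum_list lam"
proof -
  have "cells lam = Sigma {..<length lam} (\<lambda>i. {..<lam ! i})"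
    by (auto simp: cells_def)
  then have "card (cells lam) = (\<Sum>i<length lam. lam ! i)"
    by (simp add: card_SigmaI)
  also have "\<dots> = sum_list lam" by (simp add: sum_list_sum_nth atLeast0LessThan)
  finally show ?thesis .
qed

definition hstrip :: "nat list \<Rightarrow> nat list \<Rightarrow> bool" where
  "hstrip mu lam \<longleftrightarrow> length mu = length lam \<and>
     (\<forall>i<length lam. at mu i \<le> at lam i \<and> at lam (Suc i) \<le> at mu i)"

definition HS :: "nat list \<Rightarrow> nat \<Rightarrow> nat list set" where
  "HS lam r = {mu. hstrip mu lam \<and> sum_list lam = sum_list mu + r}"

definition UL :: "nat list \<Rightarrow> nat list set" where
  "UL lam = {mu. set mu \<subseteq> {0..sum_list lam} \<and> length mu = length lam}"

lemma finite_UL: "finite (UL lam)"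
  unfolding UL_def using finite_lists_length_eq[of "{0..sum_list lam}" "length lam"] by simp

lemma at_le_sum: "at xs i \<le> sum_list xs"
  by (auto simp: at_def elem_le_sum_list)

lemma hstrip_UL: "hstrip mu lam \<Longrightarrow> mu \<in> UL lam"
  unfolding UL_def hstrip_def
proof (clarsimp)
  fix x assume l: "length mu = length lam" and h: "\<forall>i<length lam. at mu i \<le> at lam i \<and> at lam (Suc i) \<le> at mu i"
    and x: "x \<in> set mu"
  then obtain i where i: "i < length mu" "mu ! i = x" by (auto simp: in_set_conv_nth)
  then have "x = at mu i" by (simp add: at_def)
  also have "\<dots> \<le> at lam i" using h i l by auto
  also have "\<dots> \<le> sum_list lam" by (rule at_le_sum)
  finally show "x \<le> sum_list lam" .
qed

lemma finite_HS: "finite (HS lam r)"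
  by (rule finite_subset[OF _ finite_UL[of lam]]) (auto simp: HS_def hstrip_UL)

fun KR :: "nat list \<Rightarrow> nat list \<Rightarrow> nat" where
  "KR lam [] = (if sum_list lam = 0 then 1 else 0)"
| "KR lam (r # rs) = (\<Sum>mu\<in>HS lam r. KR mu rs)"

lemma sorted_at_Suc: "sorted_wrt (\<ge>) xs \<Longrightarrow> at xs (Suc i) \<le> at xs i"
  by (auto simp: at_def sorted_wrt_iff_nth_less)

lemma sorted_at_mono: "sorted_wrt (\<ge>) xs \<Longrightarrow> i \<le> j \<Longrightarrow> at xs j \<le> at xs i"
  by (auto simp: at_def sorted_wrt_iff_nth_less dest: le_neq_implies_less)

lemma hstrip_sorted: "hstrip mu lam \<Longrightarrow> sorted_wrt (\<ge>) lam \<Longrightarrow> sorted_wrt (\<ge>) mu"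
proof -
  assume h: "hstrip mu lam" and s: "sorted_wrt (\<ge>) lam"
  have step: "at mu (Suc i) \<le> at mu i" for i
  proof (cases "Suc i < length mu")
    case True
    then have "at mu (Suc i) \<le> at lam (Suc i)" "at lam (Suc i) \<le> at mu i"
      using h by (auto simp: hstrip_def)
    then show ?thesis by simp
  next
    case False then show ?thesis by (simp add: at_def)
  qed
  have mono: "at mu j \<le> at mu i" if "i \<le> j" for i j
    using that
  proof (induction j)
    case 0 then show ?case by simp
  next
    case (Suc j)
    then show ?case using step[of j] by (cases "i = Suc j") auto
  qed
  show ?thesis unfolding sorted_wrt_iff_nth_less
  proof (intro allI impI)
    fix i j assume "i < j" "j < length mu"
    then show "mu ! i \<ge> mu ! j" using mono[of i j] by (simp add: at_def)
  qed
qed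

lemma ssyt_out: "T \<in> ssyt lam g \<Longrightarrow> x \<notin> cells lam \<Longrightarrow> T x = 0"
  unfolding ssyt_def by blast

lemma ssyt_row: "T \<in> ssyt lam g \<Longrightarrow> (i, j) \<in> cells lam \<Longrightarrow> (i, Suc j) \<in> cells lam \<Longrightarrow> T (i, j) \<le> T (i, Suc j)"
  by (simp add: ssyt_def)

lemma ssyt_col: "T \<in> ssyt lam g \<Longrightarrow> (i, j) \<in> cells lam \<Longrightarrow> (Suc i, j) \<in> cells lam \<Longrightarrow> T (i, j) < T (Suc i, j)"
  by (simp add: ssyt_def)

lemma ssyt_content: "T \<in> ssyt lam g \<Longrightarrow> card {x \<in> cells lam. T x = k} = g k"
  by (simp add: ssyt_def)

lemma ssyt_val: "T \<in> ssyt lam g \<Longrightarrow> x \<in> cells lam \<Longrightarrow> g (T x) \<noteq> 0"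
proof -
  assume T: "T \<in> ssyt lam g" and x: "x \<in> cells lam"
  have "finite {y \<in> cells lam. T y = T x}" using finite_cells by simp
  moreover have "x \<in> {y \<in> cells lam. T y = T x}" using x by simp
  ultimately have "card {y \<in> cells lam. T y = T x} \<noteq> 0" by (metis (mono_tags, lifting) card_eq_0_iff empty_iff)
  then show ?thesis using ssyt_content[OF T] by simp
qed

lemma ssyt_row_mono: "T \<in> ssyt lam g \<Longrightarrow> (i, j') \<in> cells lam \<Longrightarrow> j \<le> j' \<Longrightarrow> T (i, j) \<le> T (i, j')"
proof (induction j')
  case 0 then show ?case by simp
next
  case (Suc k)
  show ?case
  proof (cases "j = Suc k")
    case True then show ?thesis by simp
  next
    case False
    then have "j \<le> k" using Suc.prems by simp
    have c: "(i, k) \<in> cells lam" using Suc.prems(2) by (simp add: mem_cells)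
    have "T (i, j) \<le> T (i, k)" using Suc.IH[OF Suc.prems(1) c \<open>j \<le> k\<close>] .
    also have "\<dots> \<le> T (i, Suc k)" using ssyt_row[OF Suc.prems(1) c Suc.prems(2)] .
    finally show ?thesis .
  qed
qed

lemma finite_ssyt: "finite (ssyt lam (at gam))"
proof -
  have "ssyt lam (at gam) \<subseteq> {T. \<forall>x. (x \<in> cells lam \<longrightarrow> T x \<in> {..<length gam}) \<and> (x \<notin> cells lam \<longrightarrow> T x = 0)}"
  proof (clarsimp, intro conjI allI impI)
    fix T a b assume T: "T \<in> ssyt lam (at gam)" and c: "(a, b) \<in> cells lam"
    show "T (a, b) < length gam" using ssyt_val[OF T c] by (auto simp: at_def split: if_splits)
  next
    fix T a b assume T: "T \<in> ssyt lam (at gam)" and c: "(a, b) \<notin> cells lam"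
    show "T (a, b) = 0" using ssyt_out[OF T c] .
  qed
  moreover have "finite {T. \<forall>x. (x \<in> cells lam \<longrightarrow> T x \<in> {..<length gam}) \<and> (x \<notin> cells lam \<longrightarrow> T x = 0)}"
    by (rule finite_set_of_finite_funs) (auto simp: finite_cells)
  ultimately show ?thesis by (rule finite_subset)
qed

lemma cells_inj: "length mu1 = length mu2 \<Longrightarrow> cells mu1 = cells mu2 \<Longrightarrow> mu1 = mu2"
proof -
  assume l: "length mu1 = length mu2" and c: "cells mu1 = cells mu2"
  have "at mu1 i = at mu2 i" for i
  proof -
    have "{j. (i, j) \<in> cells mu1} = {..<at mu1 i}" "{j. (i, j) \<in> cells mu2} = {..<at mu2 i}"
      by (auto simp: mem_cells)
    then show ?thesis using c by (metis card_lessThan)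
  qed
  then show ?thesis using l by (metis at_def nth_equalityI)
qed

lemma downclosed_eq: "finite S \<Longrightarrow> (\<And>j j'. j \<in> S \<Longrightarrow> j' \<le> j \<Longrightarrow> j' \<in> (S::nat set)) \<Longrightarrow> S = {..<card S}"
proof -
  assume f: "finite S" and d: "\<And>j j'. j \<in> S \<Longrightarrow> j' \<le> j \<Longrightarrow> j' \<in> S"
  show ?thesis
  proof (cases "S = {}")
    case True then show ?thesis by simp
  next
    case False
    define m where "m = Max S"
    have "m \<in> S" using f False by (simp add: m_def)
    have "S = {..m}"
    proof
      show "S \<subseteq> {..m}" using f by (auto simp: m_def)
      show "{..m} \<subseteq> S" using d \<open>m \<in> S\<close> by auto
    qed
    then show ?thesis by (simp add: lessThan_Suc_atMost)
  qed
qed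

lemma hstrip_cells: "hstrip mu lam \<Longrightarrow> cells mu \<subseteq> cells lam"
proof
  fix x assume h: "hstrip mu lam" and x: "x \<in> cells mu"
  obtain i j where ij: "x = (i, j)" by (cases x)
  have "at mu i \<le> at lam i"
    using h by (cases "i < length lam") (auto simp: hstrip_def at_def)
  then show "x \<in> cells lam" using x ij by (auto simp: mem_cells)
qed


definition ext :: "nat list \<Rightarrow> nat list \<Rightarrow> nat \<Rightarrow> (nat \<times> nat \<Rightarrow> nat) \<Rightarrow> nat \<times> nat \<Rightarrow> nat" where
  "ext lam mu l T = (\<lambda>x. if x \<in> cells lam \<and> x \<notin> cells mu then l else T x)"

lemma at_snoc_ne: "k \<noteq> length gam \<Longrightarrow> at (gam @ [r]) k = at gam k"
  by (auto simp: at_def nth_append)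

lemma at_snoc_eq: "at (gam @ [r]) (length gam) = r"
  by (auto simp: at_def nth_append)

lemma ssyt_lt: "T \<in> ssyt mu (at gam) \<Longrightarrow> x \<in> cells mu \<Longrightarrow> T x < length gam"
  using ssyt_val[of T mu "at gam" x] by (auto simp: at_def split: if_splits)

lemma ext_ssyt:
  assumes mu: "mu \<in> HS lam r" and T: "T \<in> ssyt mu (at gam)"
  shows "ext lam mu (length gam) T \<in> ssyt lam (at (gam @ [r]))"
proof -
  let ?l = "length gam"
  let ?E = "ext lam mu ?l T"
  have h: "hstrip mu lam" and s: "sum_list lam = sum_list mu + r" using mu by (auto simp: HS_def)
  have sub: "cells mu \<subseteq> cells lam" by (rule hstrip_cells[OF h])
  have lt: "x \<in> cells mu \<Longrightarrow> T x < ?l" for x by (rule ssyt_lt[OF T])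
  have E1: "x \<in> cells mu \<Longrightarrow> ?E x = T x" for x by (simp add: ext_def)
  have E2: "x \<in> cells lam \<Longrightarrow> x \<notin> cells mu \<Longrightarrow> ?E x = ?l" for x by (simp add: ext_def)
  have E3: "x \<notin> cells lam \<Longrightarrow> ?E x = 0" for x
    using sub ssyt_out[OF T, of x] by (auto simp: ext_def)
  have Ele: "x \<in> cells lam \<Longrightarrow> ?E x \<le> ?l" for x
    using E1 E2 lt by (cases "x \<in> cells mu") (auto simp: less_imp_le)
  have row: "?E (i, j) \<le> ?E (i, Suc j)" if "(i, j) \<in> cells lam" "(i, Suc j) \<in> cells lam" for i j
  proof (cases "(i, Suc j) \<in> cells mu")
    case True
    then have "(i, j) \<in> cells mu" by (simp add: mem_cells)
    then show ?thesis using True E1 ssyt_row[OF T] by simp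
  next
    case False
    then show ?thesis using E2 Ele that by simp
  qed
  have col: "?E (i, j) < ?E (Suc i, j)" if "(i, j) \<in> cells lam" "(Suc i, j) \<in> cells lam" for i j
  proof -
    have "Suc i < length lam" using that(2) by (auto simp: mem_cells at_def split: if_splits)
    then have "at lam (Suc i) \<le> at mu i" using h by (auto simp: hstrip_def)
    then have c: "(i, j) \<in> cells mu" using that(2) by (simp add: mem_cells)
    show ?thesis
    proof (cases "(Suc i, j) \<in> cells mu")
      case True then show ?thesis using c E1 ssyt_col[OF T] by simp
    next
      case False then show ?thesis using c E1 E2 lt that by simp
    qed
  qed
  have content: "card {x \<in> cells lam. ?E x = k} = at (gam @ [r]) k" for k
  proof (cases "k = ?l")
    case True
    have "x \<in> cells lam \<and> ?E x = k \<longleftrightarrow> x \<in> cells lam - cells mu" for x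
    proof (cases "x \<in> cells mu")
      case True
      then show ?thesis using E1[OF True] lt[OF True] \<open>k = ?l\<close> by auto
    next
      case False
      then show ?thesis using E2[of x] \<open>k = ?l\<close> by auto
    qed
    then have "{x \<in> cells lam. ?E x = k} = cells lam - cells mu" by blast
    then have "card {x \<in> cells lam. ?E x = k} = card (cells lam) - card (cells mu)"
      using sub finite_cells by (simp add: card_Diff_subset finite_subset)
    also have "\<dots> = r" using s by (simp add: card_cells)
    finally show ?thesis using True by (simp add: at_snoc_eq)
  next
    case False
    have "{x \<in> cells lam. ?E x = k} = {x \<in> cells mu. T x = k}"
      using sub False by (auto simp: ext_def)
    then show ?thesis using False ssyt_content[OF T, of k] by (simp add: at_snoc_ne)
  qed
  show ?thesis unfolding ssyt_def
    using E3 row col content by blast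
qed

lemma ext_inj: "inj_on (ext lam mu l) (ssyt mu g)"
proof (rule inj_onI)
  fix T1 T2 assume T1: "T1 \<in> ssyt mu g" and T2: "T2 \<in> ssyt mu g" and e: "ext lam mu l T1 = ext lam mu l T2"
  show "T1 = T2"
  proof
    fix x show "T1 x = T2 x"
    proof (cases "x \<in> cells mu")
      case True then show ?thesis using fun_cong[OF e, of x] by (simp add: ext_def)
    next
      case False then show ?thesis using ssyt_out[OF T1 False] ssyt_out[OF T2 False] by simp
    qed
  qed
qed

lemma ext_disj:
  assumes mu1: "mu1 \<in> HS lam r" and mu2: "mu2 \<in> HS lam r"
    and T1: "T1 \<in> ssyt mu1 (at gam)" and T2: "T2 \<in> ssyt mu2 (at gam)"
    and e: "ext lam mu1 (length gam) T1 = ext lam mu2 (length gam) T2"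
  shows "mu1 = mu2"
proof -
  have c: "cells mu1 = {x \<in> cells lam. ext lam mu1 (length gam) T1 x < length gam}"
    if "mu1 \<in> HS lam r" "T1 \<in> ssyt mu1 (at gam)" for mu1 T1
    using hstrip_cells[of mu1 lam] that ssyt_lt[OF that(2)] by (auto simp: HS_def ext_def)
  have "cells mu1 = cells mu2" using c[OF mu1 T1] c[OF mu2 T2] e by simp
  moreover have "length mu1 = length mu2" using mu1 mu2 by (simp add: HS_def hstrip_def)
  ultimately show ?thesis using cells_inj by blast
qed

lemma ssyt_cover:
  assumes s: "sorted_wrt (\<ge>) lam" and T: "T \<in> ssyt lam (at (gam @ [r]))"
  shows "\<exists>mu\<in>HS lam r. T \<in> ext lam mu (length gam) ` ssyt mu (at gam)"
proof -
  let ?l = "length gam"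
  let ?R = "length lam"
  have le: "x \<in> cells lam \<Longrightarrow> T x \<le> ?l" for x
    using ssyt_val[OF T, of x] by (auto simp: at_def nth_append split: if_splits)
  define mu where "mu = map (\<lambda>i. card {j. j < lam ! i \<and> T (i, j) < ?l}) [0..<?R]"
  have lmu: "length mu = ?R" by (simp add: mu_def)
  have rowset: "{j. j < lam ! i \<and> T (i, j) < ?l} = {..<at mu i}" if "i < ?R" for i
  proof -
    have "{j. j < lam ! i \<and> T (i, j) < ?l} = {..<card {j. j < lam ! i \<and> T (i, j) < ?l}}"
    proof (rule downclosed_eq)
      show "finite {j. j < lam ! i \<and> T (i, j) < ?l}" by simp
      fix j j' assume "j \<in> {j. j < lam ! i \<and> T (i, j) < ?l}" "j' \<le> j"
      then show "j' \<in> {j. j < lam ! i \<and> T (i, j) < ?l}"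
        using ssyt_row_mono[OF T, of i j j'] that by (auto simp: cells_def)
    qed
    then show ?thesis using that by (simp add: mu_def at_def)
  qed
  have key: "x \<in> cells mu \<longleftrightarrow> x \<in> cells lam \<and> T x < ?l" for x
  proof -
    obtain i j where x: "x = (i, j)" by (cases x)
    show ?thesis
    proof (cases "i < ?R")
      case True
      then show ?thesis using rowset[OF True] x by (auto simp: mem_cells at_def lmu)
    next
      case False
      then show ?thesis using x by (auto simp: mem_cells at_def lmu)
    qed
  qed
  have sub: "cells mu \<subseteq> cells lam" using key by auto
  have h: "hstrip mu lam"
    unfolding hstrip_def
  proof (intro conjI allI impI)
    show "length mu = ?R" by (rule lmu)
    fix i assume i: "i < ?R"
    show "at mu i \<le> at lam i"
    proof (rule ccontr)
      assume "\<not> at mu i \<le> at lam i"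
      then have "(i, at lam i) \<in> cells mu" by (simp add: mem_cells)
      then show False using sub mem_cells[of i "at lam i" lam] by blast
    qed
    show "at lam (Suc i) \<le> at mu i"
    proof (rule ccontr)
      assume n: "\<not> at lam (Suc i) \<le> at mu i"
      let ?j = "at mu i"
      have c2: "(Suc i, ?j) \<in> cells lam" using n by (simp add: mem_cells)
      have c1: "(i, ?j) \<in> cells lam" using n sorted_at_Suc[OF s, of i] by (simp add: mem_cells)
      have "T (i, ?j) < T (Suc i, ?j)" by (rule ssyt_col[OF T c1 c2])
      also have "\<dots> \<le> ?l" using le[OF c2] .
      finally have "(i, ?j) \<in> cells mu" using key c1 by simp
      then show False by (simp add: mem_cells)
    qed
  qed
  have "x \<in> cells lam - cells mu \<longleftrightarrow> x \<in> cells lam \<and> T x = ?l" for x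
    using key[of x] le[of x] by auto
  then have diff: "cells lam - cells mu = {x \<in> cells lam. T x = ?l}" by blast
  have "card (cells lam - cells mu) = r"
    using diff ssyt_content[OF T, of ?l] by (simp add: at_snoc_eq)
  then have sr: "sum_list lam = sum_list mu + r"
  proof -
    have "card (cells lam - cells mu) = card (cells lam) - card (cells mu)"
      by (rule card_Diff_subset[OF finite_cells sub])
    moreover have "card (cells mu) \<le> card (cells lam)" by (rule card_mono[OF finite_cells sub])
    ultimately show ?thesis using \<open>card (cells lam - cells mu) = r\<close> card_cells[of lam] card_cells[of mu] by simp
  qed
  have muHS: "mu \<in> HS lam r" using h sr by (simp add: HS_def)
  define T0 where "T0 = (\<lambda>x. if x \<in> cells mu then T x else 0)"
  have T0: "T0 \<in> ssyt mu (at gam)"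
    unfolding ssyt_def
  proof (intro CollectI conjI allI impI)
    fix x assume "x \<notin> cells mu" then show "T0 x = 0" by (simp add: T0_def)
  next
    fix i j assume "(i, j) \<in> cells mu" "(i, Suc j) \<in> cells mu"
    then show "T0 (i, j) \<le> T0 (i, Suc j)" using sub ssyt_row[OF T] by (auto simp: T0_def)
  next
    fix i j assume "(i, j) \<in> cells mu" "(Suc i, j) \<in> cells mu"
    then show "T0 (i, j) < T0 (Suc i, j)" using sub ssyt_col[OF T] by (auto simp: T0_def)
  next
    fix k
    show "card {x \<in> cells mu. T0 x = k} = at gam k"
    proof (cases "k < ?l")
      case True
      have "{x \<in> cells mu. T0 x = k} = {x \<in> cells lam. T x = k}"
        using key True by (auto simp: T0_def)
      then show ?thesis using ssyt_content[OF T, of k] True by (simp add: at_snoc_ne)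
    next
      case False
      have e: "{x \<in> cells mu. T0 x = k} = {}" using key False by (auto simp: T0_def)
      show ?thesis unfolding e using False by (simp add: at_def)
    qed
  qed
  have "ext lam mu ?l T0 = T"
  proof
    fix x show "ext lam mu ?l T0 x = T x"
    proof (cases "x \<in> cells lam")
      case True
      then show ?thesis using key le[OF True] by (auto simp: ext_def T0_def)
    next
      case False
      then show ?thesis using sub ssyt_out[OF T False] by (auto simp: ext_def T0_def)
    qed
  qed
  then show ?thesis using muHS T0 by blast
qed

lemma kostka_step:
  assumes s: "sorted_wrt (\<ge>) lam"
  shows "card (ssyt lam (at (gam @ [r]))) = (\<Sum>mu\<in>HS lam r. card (ssyt mu (at gam)))"
proof -
  let ?l = "length gam"
  have eq: "ssyt lam (at (gam @ [r])) = (\<Union>mu\<in>HS lam r. ext lam mu ?l ` ssyt mu (at gam))"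
  proof
    show "ssyt lam (at (gam @ [r])) \<subseteq> (\<Union>mu\<in>HS lam r. ext lam mu ?l ` ssyt mu (at gam))"
    proof
      fix T assume T: "T \<in> ssyt lam (at (gam @ [r]))"
      from ssyt_cover[OF s T] obtain mu where mu: "mu \<in> HS lam r"
        and "T \<in> ext lam mu ?l ` ssyt mu (at gam)" by (rule bexE)
      then show "T \<in> (\<Union>mu\<in>HS lam r. ext lam mu ?l ` ssyt mu (at gam))" by (rule UN_I)
    qed
    show "(\<Union>mu\<in>HS lam r. ext lam mu ?l ` ssyt mu (at gam)) \<subseteq> ssyt lam (at (gam @ [r]))"
    proof (rule UN_least)
      fix mu assume mu: "mu \<in> HS lam r"
      show "ext lam mu ?l ` ssyt mu (at gam) \<subseteq> ssyt lam (at (gam @ [r]))"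
      proof (rule image_subsetI)
        fix T assume "T \<in> ssyt mu (at gam)"
        then show "ext lam mu ?l T \<in> ssyt lam (at (gam @ [r]))" by (rule ext_ssyt[OF mu])
      qed
    qed
  qed
  have "card (\<Union>mu\<in>HS lam r. ext lam mu ?l ` ssyt mu (at gam)) = (\<Sum>mu\<in>HS lam r. card (ext lam mu ?l ` ssyt mu (at gam)))"
  proof (rule card_UN_disjoint)
    show "finite (HS lam r)" by (rule finite_HS)
    show "\<forall>mu\<in>HS lam r. finite (ext lam mu ?l ` ssyt mu (at gam))" using finite_ssyt by blast
    show "\<forall>mu1\<in>HS lam r. \<forall>mu2\<in>HS lam r. mu1 \<noteq> mu2 \<longrightarrow>
        ext lam mu1 ?l ` ssyt mu1 (at gam) \<inter> ext lam mu2 ?l ` ssyt mu2 (at gam) = {}"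
    proof (intro ballI impI)
      fix mu1 mu2 assume m1: "mu1 \<in> HS lam r" and m2: "mu2 \<in> HS lam r" and ne: "mu1 \<noteq> mu2"
      show "ext lam mu1 ?l ` ssyt mu1 (at gam) \<inter> ext lam mu2 ?l ` ssyt mu2 (at gam) = {}"
      proof (rule ccontr)
        assume "ext lam mu1 ?l ` ssyt mu1 (at gam) \<inter> ext lam mu2 ?l ` ssyt mu2 (at gam) \<noteq> {}"
        then obtain T1 T2 where "T1 \<in> ssyt mu1 (at gam)" "T2 \<in> ssyt mu2 (at gam)"
          "ext lam mu1 ?l T1 = ext lam mu2 ?l T2" by blast
        then show False using ext_disj[OF m1 m2] ne by blast
      qed
    qed
  qed
  also have "\<dots> = (\<Sum>mu\<in>HS lam r. card (ssyt mu (at gam)))"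
    by (rule sum.cong) (auto intro: card_image ext_inj)
  finally show ?thesis using eq by simp
qed

lemma kostka_nil: "card (ssyt lam (at [])) = KR lam []"
proof (cases "sum_list lam = 0")
  case True
  then have "cells lam = {}" using card_cells[of lam] finite_cells[of lam] by (metis card_0_eq)
  then have "ssyt lam (at []) = {\<lambda>_. 0}" by (auto simp: ssyt_def at_def)
  then show ?thesis using True by simp
next
  case False
  then have "cells lam \<noteq> {}" using card_cells[of lam] by auto
  then obtain x where x: "x \<in> cells lam" by auto
  have "T \<notin> ssyt lam (at [])" for T using ssyt_val[of T lam "at []" x] x by (auto simp: at_def)
  then have "ssyt lam (at []) = {}" by blast
  then show ?thesis using False by simp
qed

lemma HS_sorted: "mu \<in> HS lam r \<Longrightarrow> sorted_wrt (\<ge>) lam \<Longrightarrow> sorted_wrt (\<ge>) mu"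
  by (auto simp: HS_def intro: hstrip_sorted)

lemma kostka_KR: "sorted_wrt (\<ge>) lam \<Longrightarrow> kostka lam (at gam) = KR lam (rev gam)"
proof (induction gam arbitrary: lam rule: rev_induct)
  case Nil then show ?case by (simp add: kostka_def kostka_nil)
next
  case (snoc r gam)
  have "kostka lam (at (gam @ [r])) = (\<Sum>mu\<in>HS lam r. kostka mu (at gam))"
    unfolding kostka_def by (rule kostka_step[OF snoc.prems])
  also have "\<dots> = (\<Sum>mu\<in>HS lam r. KR mu (rev gam))"
    by (rule sum.cong) (auto intro: snoc.IH HS_sorted[OF _ snoc.prems])
  finally show ?case by simp
qed


lemma sum_list_at: "sum_list xs = (\<Sum>i<length xs. at xs i)"
  by (simp add: sum_list_sum_nth atLeast0LessThan at_def)

lemma at_map_upt: "at (map f [0..<n]) i = (if i < n then f i else 0)"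
  by (simp add: at_def)

definition lo :: "nat list \<Rightarrow> nat list \<Rightarrow> nat \<Rightarrow> nat" where
  "lo nu lam i = max (at nu i) (at lam (Suc i))"

definition hi :: "nat list \<Rightarrow> nat list \<Rightarrow> nat \<Rightarrow> nat" where
  "hi nu lam i = (if i = 0 then at lam 0 else min (at lam i) (at nu (i - 1)))"

lemma lo_hi_sum:
  assumes "length nu = length lam"
  shows "(\<Sum>i<length lam. lo nu lam i + hi nu lam i) = sum_list nu + sum_list lam"
proof (cases "length lam")
  case 0 then show ?thesis using assms by simp
next
  case (Suc n)
  let ?A = "at nu" and ?L = "at lam"
  have L0: "?L (Suc n) = 0" using Suc by (simp add: at_def)
  have h: "(\<Sum>i<Suc n. hi nu lam i) = ?L 0 + (\<Sum>i<n. min (?L (Suc i)) (?A i))"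
    by (subst sum.lessThan_Suc_shift) (simp add: hi_def)
  have l: "(\<Sum>i<Suc n. lo nu lam i) = (\<Sum>i<n. max (?A i) (?L (Suc i))) + ?A n"
    using L0 by (simp add: lo_def)
  have p: "(\<Sum>i<n. max (?A i) (?L (Suc i))) + (\<Sum>i<n. min (?L (Suc i)) (?A i)) = (\<Sum>i<n. ?A i) + (\<Sum>i<n. ?L (Suc i))"
  proof -
    have "(\<Sum>i<n. max (?A i) (?L (Suc i))) + (\<Sum>i<n. min (?L (Suc i)) (?A i)) = (\<Sum>i<n. max (?A i) (?L (Suc i)) + min (?L (Suc i)) (?A i))"
      by (simp add: sum.distrib)
    also have "\<dots> = (\<Sum>i<n. ?A i + ?L (Suc i))"
      by (rule sum.cong) auto
    finally show ?thesis by (simp add: sum.distrib)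
  qed
  have "(\<Sum>i<length lam. lo nu lam i + hi nu lam i) = (\<Sum>i<Suc n. lo nu lam i) + (\<Sum>i<Suc n. hi nu lam i)"
    using Suc by (simp add: sum.distrib)
  also have "\<dots> = (\<Sum>i<Suc n. ?A i) + (\<Sum>i<Suc n. ?L i)"
  proof -
    have Ls: "(\<Sum>i<Suc n. ?L i) = ?L 0 + (\<Sum>i<n. ?L (Suc i))" by (rule sum.lessThan_Suc_shift)
    have As: "(\<Sum>i<Suc n. ?A i) = (\<Sum>i<n. ?A i) + ?A n" by simp
    show ?thesis using h l p Ls As by linarith
  qed
  also have "\<dots> = sum_list nu + sum_list lam"
    using Suc assms by (simp add: sum_list_at)
  finally show ?thesis .
qed

lemma two_hstrip_iff:
  assumes "length nu = length lam" "length mu = length lam"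
  shows "hstrip nu mu \<and> hstrip mu lam \<longleftrightarrow> (\<forall>i<length lam. lo nu lam i \<le> at mu i \<and> at mu i \<le> hi nu lam i)"
proof
  assume h: "hstrip nu mu \<and> hstrip mu lam"
  show "\<forall>i<length lam. lo nu lam i \<le> at mu i \<and> at mu i \<le> hi nu lam i"
  proof (intro allI impI)
    fix i assume i: "i < length lam"
    have "at nu i \<le> at mu i" "at lam (Suc i) \<le> at mu i" "at mu i \<le> at lam i"
      using h i assms by (auto simp: hstrip_def)
    moreover have "at mu i \<le> at nu (i - 1)" if "i \<noteq> 0"
    proof -
      have "i - 1 < length lam" "Suc (i - 1) = i" using i that by auto
      then show ?thesis using h assms by (auto simp: hstrip_def)
    qed
    ultimately show "lo nu lam i \<le> at mu i \<and> at mu i \<le> hi nu lam i"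
      by (auto simp: lo_def hi_def)
  qed
next
  assume b: "\<forall>i<length lam. lo nu lam i \<le> at mu i \<and> at mu i \<le> hi nu lam i"
  have "hstrip nu mu" unfolding hstrip_def
  proof (intro conjI allI impI)
    show "length nu = length mu" using assms by simp
    fix i assume i: "i < length mu"
    show "at nu i \<le> at mu i" using b i assms by (auto simp: lo_def)
    show "at mu (Suc i) \<le> at nu i"
    proof (cases "Suc i < length lam")
      case True then show ?thesis using b by (fastforce simp: hi_def)
    next
      case False then show ?thesis using assms by (simp add: at_def)
    qed
  qed
  moreover have "hstrip mu lam" unfolding hstrip_def
  proof (intro conjI allI impI)
    show "length mu = length lam" using assms by simp
    fix i assume i: "i < length lam"
    show "at mu i \<le> at lam i" using b i by (cases i) (auto simp: hi_def)
    show "at lam (Suc i) \<le> at mu i" using b i by (auto simp: lo_def)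
  qed
  ultimately show "hstrip nu mu \<and> hstrip mu lam" by simp
qed

definition MID :: "nat list \<Rightarrow> nat list \<Rightarrow> nat \<Rightarrow> nat \<Rightarrow> nat list set" where
  "MID nu lam s t = {mu. hstrip nu mu \<and> hstrip mu lam \<and> sum_list lam = sum_list mu + s \<and> sum_list mu = sum_list nu + t}"

definition bk :: "nat list \<Rightarrow> nat list \<Rightarrow> nat list \<Rightarrow> nat list" where
  "bk nu lam mu = map (\<lambda>i. lo nu lam i + hi nu lam i - at mu i) [0..<length lam]"

lemma bk_maps:
  assumes mu: "mu \<in> MID nu lam s t"
  shows "bk nu lam mu \<in> MID nu lam t s" "bk nu lam (bk nu lam mu) = mu"
proof -
  have hs: "hstrip nu mu" "hstrip mu lam" and s1: "sum_list lam = sum_list mu + s"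
    and s2: "sum_list mu = sum_list nu + t" using mu by (auto simp: MID_def)
  have lens: "length nu = length lam" "length mu = length lam" using hs by (auto simp: hstrip_def)
  have rng: "\<forall>i<length lam. lo nu lam i \<le> at mu i \<and> at mu i \<le> hi nu lam i"
    using two_hstrip_iff[OF lens] hs by simp
  let ?m = "bk nu lam mu"
  have lm: "length ?m = length lam" by (simp add: bk_def)
  have atm: "at ?m i = (if i < length lam then lo nu lam i + hi nu lam i - at mu i else 0)" for i
    by (simp add: bk_def at_map_upt)
  have rng2: "\<forall>i<length lam. lo nu lam i \<le> at ?m i \<and> at ?m i \<le> hi nu lam i"
    using rng atm by auto
  have hs2: "hstrip nu ?m \<and> hstrip ?m lam" using two_hstrip_iff[OF lens(1) lm] rng2 by simp
  have "sum_list ?m = (\<Sum>i<length lam. lo nu lam i + hi nu lam i - at mu i)"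
    by (simp add: sum_list_at lm atm)
  also have "\<dots> = (\<Sum>i<length lam. lo nu lam i + hi nu lam i) - (\<Sum>i<length lam. at mu i)"
    by (rule sum_subtractf_nat) (use rng in auto)
  also have "\<dots> = sum_list nu + sum_list lam - sum_list mu"
    using lo_hi_sum[OF lens(1)] lens by (simp add: sum_list_at)
  finally have sm: "sum_list ?m = sum_list nu + sum_list lam - sum_list mu" .
  show "?m \<in> MID nu lam t s" unfolding MID_def using hs2 sm s1 s2 by auto
  show "bk nu lam ?m = mu"
  proof (rule nth_equalityI)
    show "length (bk nu lam ?m) = length mu" using lens by (simp add: bk_def)
    fix i assume "i < length (bk nu lam ?m)"
    then have i: "i < length lam" by (simp add: bk_def)
    have "bk nu lam ?m ! i = lo nu lam i + hi nu lam i - at ?m i" using i by (simp add: bk_def)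
    also have "\<dots> = at mu i" using atm[of i] i rng by auto
    finally show "bk nu lam ?m ! i = mu ! i" using i lens by (simp add: at_def)
  qed
qed

lemma finite_MID: "finite (MID nu lam s t)"
  by (rule finite_subset[OF _ finite_HS[of lam s]]) (auto simp: MID_def HS_def)

lemma card_MID: "card (MID nu lam s t) = card (MID nu lam t s)"
proof -
  have le: "card (MID nu lam s t) \<le> card (MID nu lam t s)" for s t
  proof (rule card_inj_on_le)
    show "inj_on (bk nu lam) (MID nu lam s t)"
      by (rule inj_on_inverseI[where g = "bk nu lam"]) (rule bk_maps(2))
    show "bk nu lam ` MID nu lam s t \<subseteq> MID nu lam t s" using bk_maps(1) by blast
    show "finite (MID nu lam t s)" by (rule finite_MID)
  qed
  show ?thesis using le[of s t] le[of t s] by simp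
qed

lemma HS_UL: "mu \<in> HS lam s \<Longrightarrow> HS mu t \<subseteq> UL lam"
proof
  fix nu assume mu: "mu \<in> HS lam s" and nu: "nu \<in> HS mu t"
  have "nu \<in> UL mu" using nu hstrip_UL by (auto simp: HS_def)
  then show "nu \<in> UL lam" using mu by (auto simp: UL_def HS_def hstrip_def)
qed

lemma double_sum:
  "(\<Sum>mu\<in>HS lam s. \<Sum>nu\<in>HS mu t. g nu) = (\<Sum>nu\<in>UL lam. of_nat (card (MID nu lam s t)) * g nu)"
  for g :: "nat list \<Rightarrow> 'a::comm_semiring_1"
proof -
  have "(\<Sum>mu\<in>HS lam s. \<Sum>nu\<in>HS mu t. g nu) = (\<Sum>mu\<in>HS lam s. \<Sum>nu\<in>UL lam. if nu \<in> HS mu t then g nu else 0)"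
  proof (rule sum.cong[OF refl])
    fix mu assume mu: "mu \<in> HS lam s"
    show "(\<Sum>nu\<in>HS mu t. g nu) = (\<Sum>nu\<in>UL lam. if nu \<in> HS mu t then g nu else 0)"
      using HS_UL[OF mu] finite_UL by (simp add: sum.If_cases Int_absorb1)
  qed
  also have "\<dots> = (\<Sum>nu\<in>UL lam. \<Sum>mu\<in>HS lam s. if nu \<in> HS mu t then g nu else 0)"
    by (rule sum.swap)
  also have "\<dots> = (\<Sum>nu\<in>UL lam. of_nat (card (MID nu lam s t)) * g nu)"
  proof (rule sum.cong[OF refl])
    fix nu
    have e1: "(\<Sum>mu\<in>HS lam s. if nu \<in> HS mu t then g nu else 0) = (\<Sum>mu\<in>{mu\<in>HS lam s. nu \<in> HS mu t}. g nu)"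
      by (rule sum.inter_filter[symmetric]) (rule finite_HS)
    have e2: "{mu\<in>HS lam s. nu \<in> HS mu t} = MID nu lam s t"
      by (auto simp: HS_def MID_def hstrip_def)
    show "(\<Sum>mu\<in>HS lam s. if nu \<in> HS mu t then g nu else 0) = of_nat (card (MID nu lam s t)) * g nu"
      using e1 e2 by simp
  qed
  finally show ?thesis .
qed

lemma KR_swap2: "KR lam (s # t # rest) = KR lam (t # s # rest)"
proof -
  have "KR lam (s # t # rest) = (\<Sum>mu\<in>HS lam s. \<Sum>nu\<in>HS mu t. KR nu rest)" by simp
  also have "\<dots> = (\<Sum>nu\<in>UL lam. of_nat (card (MID nu lam s t)) * KR nu rest)" by (rule double_sum[where g = "\<lambda>nu. KR nu rest"])
  also have "\<dots> = (\<Sum>nu\<in>UL lam. of_nat (card (MID nu lam t s)) * KR nu rest)" by (simp add: card_MID)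
  also have "\<dots> = (\<Sum>mu\<in>HS lam t. \<Sum>nu\<in>HS mu s. KR nu rest)" by (rule double_sum[where g = "\<lambda>nu. KR nu rest", symmetric])
  also have "\<dots> = KR lam (t # s # rest)" by simp
  finally show ?thesis .
qed

lemma KR_swap: "KR lam (xs @ s # t # rest) = KR lam (xs @ t # s # rest)"
proof (induction xs arbitrary: lam)
  case Nil then show ?case unfolding append_Nil by (rule KR_swap2)
next
  case (Cons x xs) then show ?case by simp
qed



lemma move_front:
  assumes sw: "\<And>xs s t ys. F (xs @ s # t # ys) = F (xs @ t # s # ys)"
  shows "F (ys1 @ x # ys2) = F (x # ys1 @ ys2)"
proof (induction ys1 arbitrary: ys2 rule: rev_induct)
  case Nil then show ?case by simp
next
  case (snoc z zs)
  have "F ((zs @ [z]) @ x # ys2) = F (zs @ z # x # ys2)" by simp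
  also have "\<dots> = F (zs @ x # z # ys2)" by (rule sw)
  also have "\<dots> = F (x # zs @ z # ys2)" by (rule snoc.IH)
  finally show ?case by simp
qed

lemma perm_invariant:
  assumes sw: "\<And>xs s t ys. F (xs @ s # t # ys) = F (xs @ t # s # ys)"
    and m: "mset xs = mset ys"
  shows "F xs = F ys"
  using m sw
proof (induction xs arbitrary: ys F)
  case Nil then show ?case by simp
next
  case (Cons x xs)
  have "x \<in> set ys" using Cons.prems(1) by (metis list.set_intros(1) set_mset_mset)
  then obtain ys1 ys2 where ys: "ys = ys1 @ x # ys2" by (auto simp: in_set_conv_decomp)
  have m2: "mset xs = mset (ys1 @ ys2)" using Cons.prems(1) ys by simp
  have sw2: "F (x # as @ s # t # bs) = F (x # as @ t # s # bs)" for as s t bs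
    using Cons.prems(2)[of "x # as" s t bs] by simp
  have "F (x # xs) = F (x # ys1 @ ys2)" by (rule Cons.IH[OF m2, of "\<lambda>l. F (x # l)", OF sw2])
  also have "F (ys1 @ x # ys2) = F (x # ys1 @ ys2)" by (rule move_front) (rule Cons.prems(2))
  then have "F (x # ys1 @ ys2) = F ys" using ys by simp
  finally show ?case .
qed

lemma kostka_perm:
  assumes s: "sorted_wrt (\<ge>) lam" and m: "mset xs = mset ys"
  shows "kostka lam (at xs) = kostka lam (at ys)"
proof -
  have "KR lam (rev xs) = KR lam (rev ys)"
    by (rule perm_invariant[where F = "\<lambda>g. KR lam (rev g)", OF _ m]) (simp add: KR_swap)
  then show ?thesis using kostka_KR[OF s] by simp
qed

definition tau :: "nat \<Rightarrow> nat \<Rightarrow> nat" where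
  "tau k i = (if i = k then Suc k else if i = Suc k then k else i)"

lemma tau_tau[simp]: "tau k (tau k i) = i"
  by (simp add: tau_def)

lemma at_swap: "at (xs @ s # t # ys) = at (xs @ t # s # ys) \<circ> tau (length xs)"
proof
  fix i show "at (xs @ s # t # ys) i = (at (xs @ t # s # ys) \<circ> tau (length xs)) i"
    by (cases "i < length xs"; cases "i = length xs"; cases "i = Suc (length xs)")
       (auto simp: at_def tau_def nth_append nth_Cons' split: if_splits)
qed

lemma pleth_tau: "pleth_en n (g \<circ> tau k) = pleth_en n g"
proof -
  let ?A = "\<lambda>g. {S. finite S \<and> card S = n \<and> (\<forall>\<alpha>\<in>S. fin_supp \<alpha>) \<and> (\<lambda>i. \<Sum>\<alpha>\<in>S. \<alpha> i) = g}"
  let ?P = "\<lambda>S. (\<lambda>\<alpha>. \<alpha> \<circ> tau k) ` S"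
  have inj: "inj (\<lambda>\<alpha>::nat\<Rightarrow>nat. \<alpha> \<circ> tau k)"
  proof (rule injI)
    fix a b :: "nat \<Rightarrow> nat" assume "a \<circ> tau k = b \<circ> tau k"
    then have "a \<circ> tau k \<circ> tau k = b \<circ> tau k \<circ> tau k" by simp
    then show "a = b" by (simp add: fun_eq_iff)
  qed
  have PP: "?P (?P S) = S" for S by (auto simp: image_image o_def)
  have fs: "fin_supp (\<alpha> \<circ> tau k)" if "fin_supp \<alpha>" for \<alpha>
  proof -
    have "{i. (\<alpha> \<circ> tau k) i \<noteq> 0} = tau k ` {i. \<alpha> i \<noteq> 0}"
      by (auto simp: image_iff) (metis tau_tau)
    then show ?thesis using that by (simp add: fin_supp_def)
  qed
  have maps: "?P S \<in> ?A (g' \<circ> tau k)" if "S \<in> ?A g'" for S g'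
  proof -
    have S: "finite S" "card S = n" "\<forall>\<alpha>\<in>S. fin_supp \<alpha>" "(\<lambda>i. \<Sum>\<alpha>\<in>S. \<alpha> i) = g'" using that by auto
    have "card (?P S) = n" using S card_image[OF inj_on_subset[OF inj]] by simp
    moreover have "(\<lambda>i. \<Sum>\<beta>\<in>?P S. \<beta> i) = g' \<circ> tau k"
    proof
      fix i
      have "(\<Sum>\<beta>\<in>?P S. \<beta> i) = (\<Sum>\<alpha>\<in>S. (\<alpha> \<circ> tau k) i)"
        by (rule sum.reindex_cong[OF inj_on_subset[OF inj]]) auto
      also have "\<dots> = g' (tau k i)" using fun_cong[OF S(4), of "tau k i"] by simp
      finally show "(\<Sum>\<beta>\<in>?P S. \<beta> i) = (g' \<circ> tau k) i" by simp
    qed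
    ultimately show ?thesis using S fs by auto
  qed
  have "bij_betw ?P (?A g) (?A (g \<circ> tau k))"
  proof (rule bij_betw_byWitness[where f' = ?P])
    show "\<forall>S\<in>?A g. ?P (?P S) = S" using PP by blast
    show "\<forall>S\<in>?A (g \<circ> tau k). ?P (?P S) = S" using PP by blast
    show "?P ` ?A g \<subseteq> ?A (g \<circ> tau k)" using maps by blast
    show "?P ` ?A (g \<circ> tau k) \<subseteq> ?A g" using maps[of _ "g \<circ> tau k"] by (auto simp: o_def)
  qed
  then show ?thesis unfolding pleth_en_def by (simp add: bij_betw_same_card)
qed

lemma pleth_perm: "mset xs = mset ys \<Longrightarrow> pleth_en n (at xs) = pleth_en n (at ys)"
proof (rule perm_invariant[where F = "\<lambda>g. pleth_en n (at g)"])
  fix as s t bs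
  show "pleth_en n (at (as @ s # t # bs)) = pleth_en n (at (as @ t # s # bs))"
    unfolding at_swap[of as s t bs] by (rule pleth_tau)
qed


lemma sum_at_ge: "length xs \<le> k \<Longrightarrow> (\<Sum>i<k. at xs i) = sum_list xs"
proof -
  assume k: "length xs \<le> k"
  have "(\<Sum>i<k. at xs i) = (\<Sum>i<length xs. at xs i)"
    by (rule sum.mono_neutral_right) (use k in \<open>auto simp: at_def\<close>)
  then show ?thesis by (simp add: sum_list_at)
qed

lemma sum_at_zero: "(\<forall>i\<ge>k. at xs i = 0) \<Longrightarrow> (\<Sum>i<k. at xs i) = sum_list xs"
proof -
  assume z: "\<forall>i\<ge>k. at xs i = 0"
  have "(\<Sum>i<k. at xs i) = (\<Sum>i<max k (length xs). at xs i)"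
    by (rule sum.mono_neutral_left) (use z in auto)
  also have "\<dots> = sum_list xs" by (rule sum_at_ge) simp
  finally show ?thesis .
qed

lemma hstrip_le: "hstrip mu lam \<Longrightarrow> at mu i \<le> at lam i"
  by (cases "i < length lam") (auto simp: hstrip_def at_def)

lemma hstrip_Suc: "hstrip mu lam \<Longrightarrow> at lam (Suc i) \<le> at mu i"
  by (cases "i < length lam") (auto simp: hstrip_def at_def)

lemma KR_nonzero:
  "KR lam gs \<noteq> 0 \<Longrightarrow> (\<forall>i\<ge>length gs. at lam i = 0) \<and> sum_list lam = sum_list gs \<and>
     (\<forall>k. (\<Sum>i<k. at (rev gs) i) \<le> (\<Sum>i<k. at lam i))"
proof (induction gs arbitrary: lam)
  case Nil
  then have z: "\<forall>x\<in>set lam. x = 0" by (simp split: if_splits)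
  have "at lam i = 0" for i using z by (auto simp: at_def)
  then show ?case using Nil by (simp add: at_def split: if_splits)
next
  case (Cons r gs)
  have "(\<Sum>mu\<in>HS lam r. KR mu gs) \<noteq> 0" using Cons.prems by simp
  then obtain mu where mu: "mu \<in> HS lam r" and nz: "KR mu gs \<noteq> 0"
    by (rule sum.not_neutral_contains_not_neutral)
  have h: "hstrip mu lam" and s: "sum_list lam = sum_list mu + r" using mu by (auto simp: HS_def)
  from Cons.IH[OF nz] have z: "\<forall>i\<ge>length gs. at mu i = 0" and sm: "sum_list mu = sum_list gs"
    and d: "\<forall>k. (\<Sum>i<k. at (rev gs) i) \<le> (\<Sum>i<k. at mu i)" by auto
  have z2: "\<forall>i\<ge>length (r # gs). at lam i = 0"
  proof (intro allI impI)
    fix i assume "length (r # gs) \<le> i"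
    then obtain j where j: "i = Suc j" "length gs \<le> j" by (cases i) auto
    show "at lam i = 0" using hstrip_Suc[OF h, of j] z j by simp
  qed
  have d2: "(\<Sum>i<k. at (rev (r # gs)) i) \<le> (\<Sum>i<k. at lam i)" for k
  proof (cases "k \<le> length gs")
    case True
    have "(\<Sum>i<k. at (rev (r # gs)) i) = (\<Sum>i<k. at (rev gs) i)"
      by (rule sum.cong) (use True in \<open>auto simp: at_def nth_append\<close>)
    also have "\<dots> \<le> (\<Sum>i<k. at mu i)" using d by simp
    also have "\<dots> \<le> (\<Sum>i<k. at lam i)" by (rule sum_mono) (rule hstrip_le[OF h])
    finally show ?thesis .
  next
    case False
    have "(\<Sum>i<k. at (rev (r # gs)) i) = sum_list (rev (r # gs))"
      by (rule sum_at_ge) (use False in simp)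
    also have "\<dots> = sum_list lam" using s sm by simp
    also have "\<dots> = (\<Sum>i<k. at lam i)"
      by (rule sum_at_zero[symmetric]) (use z2 False in auto)
    finally show ?thesis by simp
  qed
  show ?case using z2 d2 s sm by simp
qed

definition trunc :: "nat list \<Rightarrow> nat \<Rightarrow> nat list" where
  "trunc lam k = map (\<lambda>i. if i < k then lam ! i else 0) [0..<length lam]"

lemma at_trunc: "at (trunc lam k) i = (if i < k then at lam i else 0)"
  by (simp add: trunc_def at_def)

lemma at_take: "at (take k xs) i = (if i < k then at xs i else 0)"
  by (simp add: at_def)

lemma at_eq_list: "length xs = length ys \<Longrightarrow> (\<And>i. at xs i = at ys i) \<Longrightarrow> xs = ys"
  by (metis at_def nth_equalityI)

lemma KR_diag_aux:
  assumes s: "sorted_wrt (\<ge>) lam"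
  shows "k \<le> length lam \<Longrightarrow> KR (trunc lam k) (rev (take k lam)) = 1"
proof (induction k)
  case 0
  have "sum_list (trunc lam 0) = 0" by (simp add: trunc_def)
  then show ?case by simp
next
  case (Suc k)
  let ?R = "length lam"
  have k: "k < ?R" using Suc.prems by simp
  have rv: "rev (take (Suc k) lam) = lam ! k # rev (take k lam)"
    using k by (simp add: take_Suc_conv_app_nth)
  let ?A = "trunc lam (Suc k)" and ?B = "trunc lam k"
  have sumB: "sum_list ?B = (\<Sum>i<k. at lam i)"
    by (subst sum_at_zero[symmetric, of k]) (auto simp: at_trunc)
  have sumA: "sum_list ?A = (\<Sum>i<Suc k. at lam i)"
    by (subst sum_at_zero[symmetric, of "Suc k"]) (auto simp: at_trunc)
  have atk: "at lam k = lam ! k" using k by (simp add: at_def)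
  have BHS: "?B \<in> HS ?A (lam ! k)"
    unfolding HS_def hstrip_def
  proof (intro CollectI conjI allI impI)
    show "length ?B = length ?A" by (simp add: trunc_def)
    fix i assume "i < length ?A"
    show "at ?B i \<le> at ?A i" by (simp add: at_trunc)
    show "at ?A (Suc i) \<le> at ?B i"
      using sorted_at_Suc[OF s, of i] by (simp add: at_trunc)
  next
    show "sum_list ?A = sum_list ?B + lam ! k" using sumA sumB atk by simp
  qed
  have other: "KR mu (rev (take k lam)) = 0" if mu: "mu \<in> HS ?A (lam ! k)" "mu \<noteq> ?B" for mu
  proof (rule ccontr)
    assume nz: "KR mu (rev (take k lam)) \<noteq> 0"
    have h: "hstrip mu ?A" and sm: "sum_list ?A = sum_list mu + lam ! k" using mu by (auto simp: HS_def)
    from KR_nonzero[OF nz] have z: "\<forall>i\<ge>k. at mu i = 0"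
      using k by auto
    have le: "at mu i \<le> at lam i" if "i < k" for i
      using hstrip_le[OF h, of i] that by (simp add: at_trunc)
    have "sum_list mu = (\<Sum>i<k. at mu i)" by (rule sum_at_zero[symmetric]) (use z in auto)
    moreover have "sum_list mu = (\<Sum>i<k. at lam i)" using sm sumA atk by simp
    ultimately have eqs: "(\<Sum>i<k. at mu i) = (\<Sum>i<k. at lam i)" by simp
    have "at mu i = at lam i" if "i < k" for i
    proof (rule ccontr)
      assume "at mu i \<noteq> at lam i"
      then have "at mu i < at lam i" using le[OF that] by simp
      then have "(\<Sum>i<k. at mu i) < (\<Sum>i<k. at lam i)"
        using le that by (intro sum_strict_mono_ex1) auto
      then show False using eqs by simp
    qed
    then have "at mu i = at ?B i" for i using z by (auto simp: at_trunc)
    moreover have "length mu = length ?B" using h by (simp add: hstrip_def trunc_def)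
    ultimately have "mu = ?B" by (intro at_eq_list) auto
    then show False using mu by simp
  qed
  have "KR ?A (rev (take (Suc k) lam)) = (\<Sum>mu\<in>HS ?A (lam ! k). KR mu (rev (take k lam)))"
    by (simp add: rv)
  also have "\<dots> = KR ?B (rev (take k lam))"
  proof -
    have "(\<Sum>mu\<in>HS ?A (lam ! k). KR mu (rev (take k lam))) = (\<Sum>mu\<in>{?B}. KR mu (rev (take k lam)))"
      by (rule sum.mono_neutral_right[OF finite_HS]) (use BHS other in auto)
    then show ?thesis by simp
  qed
  also have "\<dots> = 1" using Suc.IH k by simp
  finally show ?case .
qed

lemma KR_diag: "sorted_wrt (\<ge>) lam \<Longrightarrow> KR lam (rev lam) = 1"
proof -
  assume s: "sorted_wrt (\<ge>) lam"
  have "trunc lam (length lam) = lam" by (rule at_eq_list) (auto simp: trunc_def at_trunc at_def)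
  then show ?thesis using KR_diag_aux[OF s, of "length lam"] by simp
qed


lemma unitri:
  fixes K :: "'a \<Rightarrow> 'a \<Rightarrow> int" and rk :: "'a \<Rightarrow> nat" and f :: "'a \<Rightarrow> int"
  assumes "finite P" "\<forall>l\<in>P. K l l = 1" "\<forall>l\<in>P. \<forall>m\<in>P. K l m \<noteq> 0 \<longrightarrow> l \<noteq> m \<longrightarrow> rk m < rk l"
  shows "\<exists>c. \<forall>m\<in>P. f m = (\<Sum>l\<in>P. c l * K l m)"
  using assms
proof (induction "card P" arbitrary: P f rule: less_induct)
  case less
  show ?case
  proof (cases "P = {}")
    case True then show ?thesis by simp
  next
    case False
    have fin: "finite P" by (rule less.prems(1))
    have "Max (rk ` P) \<in> rk ` P" using fin False by simp
    then obtain M where M: "M \<in> P" "rk M = Max (rk ` P)" by (metis imageE)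
    have Mmax: "rk l \<le> rk M" if "l \<in> P" for l using M fin that by simp
    let ?P = "P - {M}"
    define f' where "f' m = f m - f M * K M m" for m
    have cP: "card ?P < card P" using M fin by (meson card_Diff1_less)
    obtain c' where c': "\<forall>m\<in>?P. f' m = (\<Sum>l\<in>?P. c' l * K l m)"
      using less.hyps[OF cP, of f'] less.prems by auto
    define c where "c = c'(M := f M)"
    have "f m = (\<Sum>l\<in>P. c l * K l m)" if m: "m \<in> P" for m
    proof -
      have "(\<Sum>l\<in>P. c l * K l m) = c M * K M m + (\<Sum>l\<in>?P. c l * K l m)"
        using fin M by (simp add: sum.remove)
      also have "(\<Sum>l\<in>?P. c l * K l m) = (\<Sum>l\<in>?P. c' l * K l m)"
        by (rule sum.cong) (auto simp: c_def)
      finally have eq: "(\<Sum>l\<in>P. c l * K l m) = f M * K M m + (\<Sum>l\<in>?P. c' l * K l m)"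
        by (simp add: c_def)
      show ?thesis
      proof (cases "m = M")
        case True
        have "(\<Sum>l\<in>?P. c' l * K l m) = 0"
        proof (rule sum.neutral, rule ballI)
          fix l assume l: "l \<in> ?P"
          have "K l M = 0"
          proof (rule ccontr)
            assume "K l M \<noteq> 0"
            moreover have "l \<in> P" "l \<noteq> M" using l by auto
            ultimately have "rk M < rk l" using less.prems(3) M(1) by blast
            then show False using Mmax l by force
          qed
          then show "c' l * K l m = 0" using True by simp
        qed
        then show ?thesis using eq True M less.prems(2) by simp
      next
        case False
        then have "m \<in> ?P" using m by simp
        then have "f' m = (\<Sum>l\<in>?P. c' l * K l m)" using c' by blast
        then show ?thesis using eq by (simp add: f'_def)
      qed
    qed
    then show ?thesis by blast
  qed
qed

definition Pm :: "nat \<Rightarrow> nat list set" where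
  "Pm m = {lam. is_partition lam \<and> sum_list lam = m}"

lemma part_length: "is_partition xs \<Longrightarrow> length xs \<le> sum_list xs"
proof (induction xs)
  case Nil then show ?case by simp
next
  case (Cons x xs)
  then have "is_partition xs" "0 < x" by (auto simp: is_partition_def)
  then show ?case using Cons.IH by simp
qed

lemma finite_Pm: "finite (Pm m)"
proof -
  have "Pm m \<subseteq> {xs. set xs \<subseteq> {0..m} \<and> length xs \<le> m}"
    by (auto simp: Pm_def part_length member_le_sum_list)
  then show ?thesis by (rule finite_subset) (rule finite_lists_length_le, simp)
qed

lemma part_sorted: "is_partition xs \<Longrightarrow> sorted_wrt (\<ge>) xs"
  by (simp add: is_partition_def)

lemma part_at_pos: "is_partition xs \<Longrightarrow> i < length xs \<Longrightarrow> 0 < at xs i"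
  by (auto simp: is_partition_def at_def)

definition rkf :: "nat \<Rightarrow> nat list \<Rightarrow> nat" where
  "rkf m mu = (\<Sum>k<Suc m. \<Sum>i<k. at mu i)"

lemma dom_rk:
  assumes l: "lam \<in> Pm m" and u: "mu \<in> Pm m" and nz: "kostka lam (at mu) \<noteq> 0" and ne: "lam \<noteq> mu"
  shows "rkf m mu < rkf m lam"
proof -
  have pl: "is_partition lam" "sum_list lam = m" and pu: "is_partition mu" "sum_list mu = m"
    using l u by (auto simp: Pm_def)
  have "KR lam (rev mu) \<noteq> 0" using nz kostka_KR[OF part_sorted[OF pl(1)]] by simp
  from KR_nonzero[OF this] have d: "\<forall>k. (\<Sum>i<k. at mu i) \<le> (\<Sum>i<k. at lam i)" by simp
  have "\<exists>k\<in>{..<Suc m}. (\<Sum>i<k. at mu i) < (\<Sum>i<k. at lam i)"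
  proof (rule ccontr)
    assume "\<not> ?thesis"
    then have eq: "(\<Sum>i<k. at mu i) = (\<Sum>i<k. at lam i)" if "k \<le> m" for k
      using d that by (metis le_antisym lessThan_iff less_Suc_eq_le not_le)
    have a1: "at mu i = at lam i" if "i < m" for i
      using eq[of i] eq[of "Suc i"] that by simp
    have lm: "length mu \<le> m" "length lam \<le> m" using part_length[OF pl(1)] part_length[OF pu(1)] pl(2) pu(2) by auto
    have a2: "at mu i = at lam i" if "m \<le> i" for i using lm that by (simp add: at_def)
    have a: "at mu i = at lam i" for i using a1 a2 by (cases "i < m") auto
    have "length mu = length lam"
    proof (rule ccontr)
      assume "length mu \<noteq> length lam"
      then consider "length mu < length lam" | "length lam < length mu" by linarith
      then show False
      proof cases
        case 1 then show False using part_at_pos[OF pl(1) 1] a[of "length mu"] by (simp add: at_def)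
      next
        case 2 then show False using part_at_pos[OF pu(1) 2] a[of "length lam"] by (simp add: at_def)
      qed
    qed
    then have "mu = lam" using a by (intro at_eq_list) auto
    then show False using ne by simp
  qed
  then show ?thesis unfolding rkf_def
    by (intro sum_strict_mono_ex1) (use d in auto)
qed

lemma at_filter_pos: "sorted_wrt (\<ge>) ys \<Longrightarrow> at (filter (\<lambda>x. 0 < x) ys) = at ys"
proof (induction ys)
  case Nil then show ?case by simp
next
  case (Cons y ys)
  then have IH: "at (filter (\<lambda>x. 0 < x) ys) = at ys" by simp
  show ?case
  proof (cases "0 < y")
    case True
    show ?thesis
    proof
      fix i show "at (filter (\<lambda>x. 0 < x) (y # ys)) i = at (y # ys) i"
        using True fun_cong[OF IH, of "i - 1"] by (cases i) (auto simp: at_def)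
    qed
  next
    case False
    then have "\<forall>x\<in>set ys. x = 0" using Cons.prems by auto
    then have "filter (\<lambda>x. 0 < x) (y # ys) = []" using False by (auto simp: filter_empty_conv)
    moreover have "at (y # ys) i = 0" for i
      using False \<open>\<forall>x\<in>set ys. x = 0\<close> by (auto simp: at_def nth_Cons' nth_mem)
    ultimately show ?thesis by (auto simp: at_def)
  qed
qed

lemma expansion_exists: "\<exists>c. schur_expansion (pleth_en n) c"
proof -
  let ?K = "\<lambda>lam mu. int (kostka lam (at mu))"
  have "\<forall>m. \<exists>c. \<forall>mu\<in>Pm m. pleth_en n (at mu) = (\<Sum>lam\<in>Pm m. c lam * ?K lam mu)"
  proof
    fix m
    show "\<exists>c. \<forall>mu\<in>Pm m. pleth_en n (at mu) = (\<Sum>lam\<in>Pm m. c lam * ?K lam mu)"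
    proof (rule unitri[where rk = "rkf m"])
      show "finite (Pm m)" by (rule finite_Pm)
      show "\<forall>l\<in>Pm m. ?K l l = 1"
        using kostka_KR KR_diag part_sorted by (auto simp: Pm_def)
      show "\<forall>l\<in>Pm m. \<forall>u\<in>Pm m. ?K l u \<noteq> 0 \<longrightarrow> l \<noteq> u \<longrightarrow> rkf m u < rkf m l"
        using dom_rk by auto
    qed
  qed
  then obtain C where C: "\<forall>m. \<forall>mu\<in>Pm m. pleth_en n (at mu) = (\<Sum>lam\<in>Pm m. C m lam * ?K lam mu)"
    by metis
  define c where "c lam = C (sum_list lam) lam" for lam
  have "schur_expansion (pleth_en n) c"
    unfolding schur_expansion_def
  proof (intro allI impI)
    fix g assume fs: "fin_supp g"
    then obtain N where N0: "\<forall>i\<in>{i. g i \<noteq> 0}. i < N"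
      by (auto simp: fin_supp_def finite_nat_set_iff_bounded)
    then have N: "{i. g i \<noteq> 0} \<subseteq> {..<N}" by auto
    define xs where "xs = map g [0..<N]"
    have axs: "at xs = g"
    proof
      fix i show "at xs i = g i" using N by (cases "i < N") (auto simp: xs_def at_def)
    qed
    have dg: "deg g = sum_list xs"
    proof -
      have "deg g = (\<Sum>i<N. g i)"
        unfolding deg_def by (rule sum.mono_neutral_left) (use N in auto)
      also have "\<dots> = sum_list xs" by (simp add: xs_def sum_list_sum_nth atLeast0LessThan)
      finally show ?thesis .
    qed
    define ys where "ys = rev (sort xs)"
    have mys: "mset xs = mset ys" by (simp add: ys_def)
    have sys: "sorted_wrt (\<ge>) ys" by (simp add: ys_def sorted_wrt_rev)
    define mu where "mu = filter (\<lambda>x. 0 < x) ys"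
    have amu: "at mu = at ys" unfolding mu_def by (rule at_filter_pos[OF sys])
    have pmu: "is_partition mu" unfolding mu_def is_partition_def
      using sorted_wrt_filter[OF sys] by auto
    have smu: "sum_list mu = sum_list ys"
    proof -
      have "sum_list mu = (\<Sum>i<length ys. at mu i)" by (rule sum_at_ge[symmetric]) (simp add: mu_def)
      also have "\<dots> = sum_list ys" using amu by (simp add: sum_list_at)
      finally show ?thesis .
    qed
    have sxs: "sum_list ys = sum_list xs" using mys by (metis sum_mset_sum_list)
    let ?m = "deg g"
    have muP: "mu \<in> Pm ?m" using pmu smu sxs dg by (simp add: Pm_def)
    have "pleth_en n g = pleth_en n (at xs)" using axs by simp
    also have "\<dots> = pleth_en n (at ys)" by (rule pleth_perm[OF mys])
    also have "\<dots> = pleth_en n (at mu)" using amu by simp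
    also have "\<dots> = (\<Sum>lam\<in>Pm ?m. C ?m lam * ?K lam mu)" using C muP by blast
    also have "\<dots> = (\<Sum>lam\<in>Pm ?m. c lam * int (kostka lam g))"
    proof (rule sum.cong[OF refl])
      fix lam assume l: "lam \<in> Pm ?m"
      have "kostka lam (at mu) = kostka lam (at ys)" using amu by simp
      also have "\<dots> = kostka lam (at xs)"
        using kostka_perm[OF part_sorted, of lam ys xs] l mys by (simp add: Pm_def)
      finally have "kostka lam (at mu) = kostka lam g" using axs by simp
      then show "C ?m lam * ?K lam mu = c lam * int (kostka lam g)"
        using l by (simp add: c_def Pm_def)
    qed
    finally show "pleth_en n g = (\<Sum>lam\<in>{lam. is_partition lam \<and> sum_list lam = deg g}. c lam * int (kostka lam g))"
      by (simp add: Pm_def)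
  qed
  then show ?thesis by blast
qed


fun Psi :: "(nat list \<Rightarrow> int) \<Rightarrow> nat list \<Rightarrow> nat \<Rightarrow> int" where
  "Psi F g 0 = F g"
| "Psi F g (Suc j) = (\<Sum>r\<in>{1..Suc j}. (-1) ^ (r - 1) * Psi F (g @ [r]) (Suc j - r))"

lemma Psi_lin:
  assumes F: "\<And>g. F g = (\<Sum>l\<in>Pm (sum_list g). c l * G l g)"
  shows "Psi F g j = (\<Sum>l\<in>Pm (sum_list g + j). c l * Psi (G l) g j)"
proof (induction j arbitrary: g rule: less_induct)
  case (less j)
  show ?case
  proof (cases j)
    case 0 then show ?thesis using F by simp
  next
    case (Suc j')
    have "Psi F g j = (\<Sum>r\<in>{1..j}. (-1) ^ (r - 1) * Psi F (g @ [r]) (j - r))"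
      using Suc by simp
    also have "\<dots> = (\<Sum>r\<in>{1..j}. (-1) ^ (r - 1) * (\<Sum>l\<in>Pm (sum_list g + j). c l * Psi (G l) (g @ [r]) (j - r)))"
    proof (rule sum.cong[OF refl])
      fix r assume r: "r \<in> {1..j}"
      have "Psi F (g @ [r]) (j - r) = (\<Sum>l\<in>Pm (sum_list (g @ [r]) + (j - r)). c l * Psi (G l) (g @ [r]) (j - r))"
        using r by (intro less.IH) auto
      also have "sum_list (g @ [r]) + (j - r) = sum_list g + j" using r by simp
      finally show "(-1) ^ (r - 1) * Psi F (g @ [r]) (j - r) = (-1) ^ (r - 1) * (\<Sum>l\<in>Pm (sum_list g + j). c l * Psi (G l) (g @ [r]) (j - r))"
        by simp
    qed
    also have "\<dots> = (\<Sum>r\<in>{1..j}. \<Sum>l\<in>Pm (sum_list g + j). c l * ((-1) ^ (r - 1) * Psi (G l) (g @ [r]) (j - r)))"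
      by (simp add: sum_distrib_left mult.left_commute)
    also have "\<dots> = (\<Sum>l\<in>Pm (sum_list g + j). \<Sum>r\<in>{1..j}. c l * ((-1) ^ (r - 1) * Psi (G l) (g @ [r]) (j - r)))"
      by (rule sum.swap)
    also have "\<dots> = (\<Sum>l\<in>Pm (sum_list g + j). c l * Psi (G l) g j)"
      by (simp only: Suc Psi.simps(2) sum_distrib_left)
    finally show ?thesis .
  qed
qed

lemma invol_sum_zero:
  fixes s :: "'a \<Rightarrow> int"
  assumes fin: "finite A" and m: "\<And>x. x \<in> A \<Longrightarrow> sg x \<in> A" and inv: "\<And>x. x \<in> A \<Longrightarrow> sg (sg x) = x"
    and sgn: "\<And>x. x \<in> A \<Longrightarrow> s (sg x) = - s x"
  shows "(\<Sum>x\<in>A. s x) = 0"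
proof -
  have b: "bij_betw sg A A"
  proof (rule bij_betw_byWitness[where f' = sg])
    show "\<forall>a\<in>A. sg (sg a) = a" using inv by blast
    show "\<forall>a\<in>A. sg (sg a) = a" using inv by blast
    show "sg ` A \<subseteq> A" using m by blast
    show "sg ` A \<subseteq> A" using m by blast
  qed
  have "(\<Sum>x\<in>A. s x) = (\<Sum>x\<in>A. s (sg x))" by (rule sum.reindex_bij_betw[OF b, symmetric])
  also have "\<dots> = - (\<Sum>x\<in>A. s x)" using sgn by (simp add: sum_negf)
  finally show ?thesis by simp
qed

definition vs :: "nat list \<Rightarrow> nat list \<Rightarrow> bool" where
  "vs mu lam \<longleftrightarrow> length mu = length lam \<and> (\<forall>i<length lam. at mu i \<le> at lam i \<and> at lam i \<le> Suc (at mu i))"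

definition XS :: "nat list \<Rightarrow> nat list \<Rightarrow> nat list set" where
  "XS mu lam = {mu'. hstrip mu mu' \<and> vs mu' lam}"

lemma finite_XS: "finite (XS mu lam)"
proof (rule finite_subset[OF _ finite_UL[of lam]])
  show "XS mu lam \<subseteq> UL lam"
  proof
    fix x assume "x \<in> XS mu lam"
    then have v: "vs x lam" by (simp add: XS_def)
    have "y \<le> sum_list lam" if "y \<in> set x" for y
    proof -
      have "\<exists>i<length x. x ! i = y" using that by (simp add: in_set_conv_nth)
      then obtain i where i: "i < length x" "x ! i = y" by blast
      have "y = at x i" using i by (simp add: at_def)
      also have "\<dots> \<le> at lam i" using v i by (auto simp: vs_def)
      also have "\<dots> \<le> sum_list lam" by (rule at_le_sum)
      finally show ?thesis .
    qed
    then show "x \<in> UL lam" using v by (auto simp: UL_def vs_def)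
  qed
qed

definition tog :: "nat list \<Rightarrow> nat list \<Rightarrow> nat list \<Rightarrow> nat list" where
  "tog mu lam mu' = (let i = (LEAST i. at mu i < at lam i) in
      mu'[i := (if at mu' i = at lam i then at lam i - 1 else at lam i)])"

lemma at_update: "at (xs[i := v]) k = (if k = i \<and> i < length xs then v else at xs k)"
  by (auto simp: at_def)

lemma XS_sum_zero:
  assumes s: "sorted_wrt (\<ge>) lam" and ex: "\<exists>i. at mu i < at lam i"
  shows "(\<Sum>x\<in>XS mu lam. ((-1::int) ^ sum_list x)) = 0"
proof (rule invol_sum_zero[where sg = "tog mu lam"])
  show "finite (XS mu lam)" by (rule finite_XS)
  define i where "i = (LEAST i. at mu i < at lam i)"
  have ilt: "at mu i < at lam i" unfolding i_def by (rule LeastI_ex[OF ex])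
  have imin: "\<not> at mu k < at lam k" if "k < i" for k using not_less_Least[of k] that by (simp add: i_def)
  have tg: "tog mu lam x = x[i := (if at x i = at lam i then at lam i - 1 else at lam i)]" for x
    by (simp add: tog_def i_def Let_def)
  fix x assume x: "x \<in> XS mu lam"
  have h: "hstrip mu x" and v: "vs x lam" using x by (auto simp: XS_def)
  have iR: "i < length lam"
  proof (rule ccontr)
    assume "\<not> i < length lam" then show False using ilt by (simp add: at_def)
  qed
  have lx: "length x = length lam" using v by (simp add: vs_def)
  let ?v = "if at x i = at lam i then at lam i - 1 else at lam i"
  have xi: "at lam i \<le> Suc (at x i)" "at x i \<le> at lam i" using v iR by (auto simp: vs_def)
  have atT: "at (tog mu lam x) k = (if k = i then ?v else at x k)" for k
    using iR lx by (simp add: tg at_update)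
  show "tog mu lam x \<in> XS mu lam"
    unfolding XS_def
  proof (intro CollectI conjI)
    show "hstrip mu (tog mu lam x)" unfolding hstrip_def
    proof (intro conjI allI impI)
      show "length mu = length (tog mu lam x)" using h by (simp add: tg hstrip_def)
      fix k assume k: "k < length (tog mu lam x)"
      show "at mu k \<le> at (tog mu lam x) k"
        using h k ilt hstrip_def atT by (cases "k = i") (auto simp: hstrip_def tg)
      show "at (tog mu lam x) (Suc k) \<le> at mu k"
      proof (cases "Suc k = i")
        case True
        then have "\<not> at mu k < at lam k" using imin by simp
        moreover have "at lam i \<le> at lam k" using sorted_at_Suc[OF s, of k] True by simp
        ultimately show ?thesis using atT True by auto
      next
        case False
        then show ?thesis using h k atT by (auto simp: hstrip_def tg)
      qed
    qed
    show "vs (tog mu lam x) lam" unfolding vs_def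
      using v atT xi by (auto simp: vs_def tg)
  qed
  show "tog mu lam (tog mu lam x) = x"
  proof (rule at_eq_list)
    show "length (tog mu lam (tog mu lam x)) = length x" by (simp add: tg)
    fix k
    have "at (tog mu lam (tog mu lam x)) k = (if k = i then (if at (tog mu lam x) i = at lam i then at lam i - 1 else at lam i) else at (tog mu lam x) k)"
      using iR lx by (simp add: tg at_update)
    then show "at (tog mu lam (tog mu lam x)) k = at x k"
      using atT xi by auto
  qed
  have sx: "sum_list (tog mu lam x) = sum_list x + ?v - x ! i"
    using iR lx by (simp add: tg sum_list_update)
  have xi2: "x ! i = at x i" using iR lx by (simp add: at_def)
  show "(-1::int) ^ sum_list (tog mu lam x) = - ((-1) ^ sum_list x)"
  proof (cases "at x i = at lam i")
    case True
    then have "sum_list x = Suc (sum_list (tog mu lam x))"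
      using sx xi2 ilt iR lx at_le_sum[of x i] by auto
    then show ?thesis by simp
  next
    case False
    then have "sum_list (tog mu lam x) = Suc (sum_list x)"
      using sx xi xi2 at_le_sum[of x i] by auto
    then show ?thesis by simp
  qed
qed


lemma le_sum_eq:
  assumes l: "length mu = length lam" and le: "\<And>i. at mu i \<le> at lam i" and s: "sum_list mu = sum_list lam"
  shows "mu = lam"
proof (rule at_eq_list[OF l])
  fix i
  show "at mu i = at lam i"
  proof (rule ccontr)
    assume ne: "at mu i \<noteq> at lam i"
    then have lt: "at mu i < at lam i" using le[of i] by simp
    then have iR: "i < length lam" by (simp add: at_def split: if_splits)
    have "(\<Sum>k<length lam. at mu k) < (\<Sum>k<length lam. at lam k)"
      by (rule sum_strict_mono_ex1) (use le lt iR in auto)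
    then show False using s l by (simp add: sum_list_at)
  qed
qed

lemma hstrip_le_sum: "hstrip mu x \<Longrightarrow> sum_list mu \<le> sum_list x"
proof -
  assume h: "hstrip mu x"
  have "(\<Sum>k<length x. at mu k) \<le> (\<Sum>k<length x. at x k)" by (rule sum_mono) (rule hstrip_le[OF h])
  then show ?thesis using h by (simp add: sum_list_at hstrip_def)
qed

lemma vs_le_sum: "vs x lam \<Longrightarrow> sum_list x \<le> sum_list lam"
proof -
  assume h: "vs x lam"
  have "(\<Sum>k<length lam. at x k) \<le> (\<Sum>k<length lam. at lam k)" by (rule sum_mono) (use h in \<open>auto simp: vs_def\<close>)
  then show ?thesis using h by (simp add: sum_list_at vs_def)
qed

definition cnt :: "nat list \<Rightarrow> nat list \<Rightarrow> nat \<Rightarrow> nat" where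
  "cnt mu lam r = card {x \<in> XS mu lam. sum_list x = sum_list mu + r}"

lemma W_eq:
  assumes s: "sorted_wrt (\<ge>) lam" and l: "length mu = length lam" and sm: "sum_list lam = sum_list mu + J" and J: "1 \<le> J"
  shows "(\<Sum>r\<in>{1..J}. (-1) ^ (r - 1) * int (cnt mu lam r)) = (if hstrip mu mu \<and> vs mu lam then 1 else 0)"
proof -
  have ex: "\<exists>i. at mu i < at lam i"
  proof (rule ccontr)
    assume "\<not> ?thesis"
    then have "\<And>i. at lam i \<le> at mu i" by (simp add: not_less)
    then have "(\<Sum>k<length lam. at lam k) \<le> (\<Sum>k<length lam. at mu k)" by (rule sum_mono)
    then show False using sm J l by (simp add: sum_list_at)
  qed
  have z: "(\<Sum>x\<in>XS mu lam. ((-1::int) ^ sum_list x)) = 0" by (rule XS_sum_zero[OF s ex])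
  let ?g = "\<lambda>x. sum_list x - sum_list mu"
  have rng: "?g ` XS mu lam \<subseteq> {0..J}"
  proof
    fix y assume "y \<in> ?g ` XS mu lam"
    then obtain x where x: "x \<in> XS mu lam" "y = ?g x" by blast
    have "sum_list x \<le> sum_list lam" using x by (intro vs_le_sum) (simp add: XS_def)
    then show "y \<in> {0..J}" using x sm by simp
  qed
  have cnt_eq: "{x \<in> XS mu lam. ?g x = r} = {x \<in> XS mu lam. sum_list x = sum_list mu + r}" for r
  proof -
    have "x \<in> XS mu lam \<Longrightarrow> sum_list mu \<le> sum_list x" for x by (intro hstrip_le_sum) (simp add: XS_def)
    then show ?thesis by auto
  qed
  have "(\<Sum>x\<in>XS mu lam. ((-1::int) ^ sum_list x)) = (\<Sum>r\<in>{0..J}. \<Sum>x\<in>{x \<in> XS mu lam. ?g x = r}. (-1::int) ^ sum_list x)"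
    by (rule sum.group[symmetric]) (use finite_XS rng in auto)
  also have "\<dots> = (\<Sum>r\<in>{0..J}. (-1) ^ sum_list mu * ((-1) ^ r * int (cnt mu lam r)))"
  proof (rule sum.cong[OF refl])
    fix r
    have "(\<Sum>x\<in>{x \<in> XS mu lam. ?g x = r}. (-1::int) ^ sum_list x) = (\<Sum>x\<in>{x \<in> XS mu lam. sum_list x = sum_list mu + r}. (-1::int) ^ (sum_list mu + r))"
      unfolding cnt_eq by (rule sum.cong) auto
    also have "\<dots> = (-1) ^ sum_list mu * ((-1) ^ r * int (cnt mu lam r))"
      by (simp add: cnt_def power_add)
    finally show "(\<Sum>x\<in>{x \<in> XS mu lam. ?g x = r}. (-1::int) ^ sum_list x) = (-1) ^ sum_list mu * ((-1) ^ r * int (cnt mu lam r))" .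
  qed
  also have "\<dots> = (-1) ^ sum_list mu * (\<Sum>r\<in>{0..J}. (-1) ^ r * int (cnt mu lam r))"
    by (simp add: sum_distrib_left)
  finally have z2: "(\<Sum>r\<in>{0..J}. (-1::int) ^ r * int (cnt mu lam r)) = 0" using z by simp
  have c0: "int (cnt mu lam 0) = (if hstrip mu mu \<and> vs mu lam then 1 else 0)"
  proof -
    have "{x \<in> XS mu lam. sum_list x = sum_list mu + 0} = (if hstrip mu mu \<and> vs mu lam then {mu} else {})"
    proof -
      have "x = mu" if "x \<in> XS mu lam" "sum_list x = sum_list mu" for x
      proof -
        have h: "hstrip mu x" using that by (simp add: XS_def)
        show ?thesis
          by (rule le_sum_eq[symmetric]) (use h that(2) hstrip_le[OF h] in \<open>auto simp: hstrip_def\<close>)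
      qed
      then show ?thesis by (auto simp: XS_def)
    qed
    then show ?thesis by (simp add: cnt_def)
  qed
  have "(\<Sum>r\<in>{0..J}. (-1::int) ^ r * int (cnt mu lam r)) = int (cnt mu lam 0) + (\<Sum>r\<in>{1..J}. (-1) ^ r * int (cnt mu lam r))"
    by (simp add: sum.atLeast_Suc_atMost)
  moreover have "(\<Sum>r\<in>{1..J}. (-1) ^ (r - 1) * int (cnt mu lam r)) = - (\<Sum>r\<in>{1..J}. (-1) ^ r * int (cnt mu lam r))"
  proof -
    have "(\<Sum>r\<in>{1..J}. (-1) ^ (r - 1) * int (cnt mu lam r)) = (\<Sum>r\<in>{1..J}. - ((-1) ^ r * int (cnt mu lam r)))"
    proof (rule sum.cong[OF refl])
      fix r assume "r \<in> {1..J}"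
      then obtain q where "r = Suc q" by (cases r) auto
      then show "(-1) ^ (r - 1) * int (cnt mu lam r) = - ((-1) ^ r * int (cnt mu lam r))" by simp
    qed
    then show ?thesis by (simp add: sum_negf)
  qed
  ultimately show ?thesis using z2 c0 by simp
qed


lemma sum_swap_count:
  fixes h :: "'b \<Rightarrow> 'c::comm_semiring_1"
  assumes fA: "finite A" and fU: "finite U" and sub: "\<And>a. a \<in> A \<Longrightarrow> B a \<subseteq> U"
  shows "(\<Sum>a\<in>A. \<Sum>b\<in>B a. h b) = (\<Sum>b\<in>U. of_nat (card {a\<in>A. b \<in> B a}) * h b)"
proof -
  have "(\<Sum>a\<in>A. \<Sum>b\<in>B a. h b) = (\<Sum>a\<in>A. \<Sum>b\<in>U. if b \<in> B a then h b else 0)"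
  proof (rule sum.cong[OF refl])
    fix a assume a: "a \<in> A"
    show "(\<Sum>b\<in>B a. h b) = (\<Sum>b\<in>U. if b \<in> B a then h b else 0)"
      using sub[OF a] fU by (simp add: sum.If_cases Int_absorb1)
  qed
  also have "\<dots> = (\<Sum>b\<in>U. \<Sum>a\<in>A. if b \<in> B a then h b else 0)" by (rule sum.swap)
  also have "\<dots> = (\<Sum>b\<in>U. of_nat (card {a\<in>A. b \<in> B a}) * h b)"
  proof (rule sum.cong[OF refl])
    fix b
    have e1: "(\<Sum>a\<in>A. if b \<in> B a then h b else 0) = (\<Sum>a\<in>{a\<in>A. b \<in> B a}. h b)"
      by (rule sum.inter_filter[symmetric]) (rule fA)
    show "(\<Sum>a\<in>A. if b \<in> B a then h b else 0) = of_nat (card {a\<in>A. b \<in> B a}) * h b"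
      using e1 by simp
  qed
  finally show ?thesis .
qed

lemma KR_sorted: "KR mu gs \<noteq> 0 \<Longrightarrow> sorted_wrt (\<ge>) mu"
proof (cases gs)
  case Nil
  assume "KR mu gs \<noteq> 0"
  then have "\<forall>x\<in>set mu. x = 0" using Nil by (simp split: if_splits)
  then have "mu ! j = 0" if "j < length mu" for j using that nth_mem by blast
  then show ?thesis by (simp add: sorted_wrt_iff_nth_less)
next
  case (Cons r gs')
  assume "KR mu gs \<noteq> 0"
  then have "(\<Sum>nu\<in>HS mu r. KR nu gs') \<noteq> 0" using Cons by simp
  then obtain nu where "nu \<in> HS mu r" "KR nu gs' \<noteq> 0" by (rule sum.not_neutral_contains_not_neutral)
  then have h: "hstrip nu mu" by (simp add: HS_def)
  have st: "at mu (Suc i) \<le> at mu i" for i using hstrip_Suc[OF h, of i] hstrip_le[OF h, of i] by simp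
  have mono: "at mu j \<le> at mu i" if "i \<le> j" for i j
    using that
  proof (induction j)
    case 0 then show ?case by simp
  next
    case (Suc j) then show ?case using st[of j] by (cases "i = Suc j") auto
  qed
  show ?thesis unfolding sorted_wrt_iff_nth_less
  proof (intro allI impI)
    fix i j assume "i < j" "j < length mu"
    then show "mu ! i \<ge> mu ! j" using mono[of i j] by (simp add: at_def)
  qed
qed

lemma sorted_hstrip_self: "sorted_wrt (\<ge>) mu \<Longrightarrow> hstrip mu mu"
  by (simp add: hstrip_def sorted_at_Suc)

definition VS :: "nat list \<Rightarrow> nat \<Rightarrow> nat list set" where
  "VS lam j = {mu. vs mu lam \<and> sum_list lam = sum_list mu + j}"

lemma VS_UL: "VS lam j \<subseteq> UL lam"
proof
  fix x assume "x \<in> VS lam j"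
  then have v: "vs x lam" by (simp add: VS_def)
  have "y \<le> sum_list lam" if "y \<in> set x" for y
  proof -
    have "\<exists>i<length x. x ! i = y" using that by (simp add: in_set_conv_nth)
    then obtain i where i: "i < length x" "x ! i = y" by blast
    have "y = at x i" using i by (simp add: at_def)
    also have "\<dots> \<le> at lam i" using v i by (auto simp: vs_def)
    also have "\<dots> \<le> sum_list lam" by (rule at_le_sum)
    finally show ?thesis .
  qed
  then show "x \<in> UL lam" using v by (auto simp: UL_def vs_def)
qed

lemma finite_VS: "finite (VS lam j)"
  by (rule finite_subset[OF VS_UL finite_UL])

lemma VS_0: "VS lam 0 = {lam}"
proof
  show "VS lam 0 \<subseteq> {lam}"
  proof
    fix mu assume "mu \<in> VS lam 0"
    then have v: "vs mu lam" and s: "sum_list lam = sum_list mu" by (auto simp: VS_def)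
    have "mu = lam"
    proof (rule le_sum_eq)
      show "length mu = length lam" using v by (simp add: vs_def)
      fix i show "at mu i \<le> at lam i" using v by (cases "i < length lam") (auto simp: vs_def at_def)
    qed (use s in simp)
    then show "mu \<in> {lam}" by simp
  qed
  show "{lam} \<subseteq> VS lam 0" by (simp add: VS_def vs_def)
qed

lemma HS_sub_UL: "mu' \<in> VS lam k \<Longrightarrow> HS mu' r \<subseteq> UL lam"
proof
  fix mu assume a: "mu' \<in> VS lam k" and b: "mu \<in> HS mu' r"
  have "mu \<in> UL mu'" using b hstrip_UL by (auto simp: HS_def)
  moreover have "sum_list mu' \<le> sum_list lam" "length mu' = length lam" using a by (auto simp: VS_def vs_def)
  ultimately show "mu \<in> UL lam" by (auto simp: UL_def)
qed

lemma Psi_KR: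
  assumes s: "sorted_wrt (\<ge>) lam"
  shows "Psi (\<lambda>g. int (KR lam (rev g))) g j = (\<Sum>mu\<in>VS lam j. int (KR mu (rev g)))"
proof (induction j arbitrary: g rule: less_induct)
  case (less J)
  show ?case
  proof (cases J)
    case 0 then show ?thesis by (simp add: VS_0)
  next
    case (Suc j')
    let ?F = "\<lambda>g. int (KR lam (rev g))"
    let ?C = "\<lambda>mu r. card {mu' \<in> VS lam (J - r). mu \<in> HS mu' r}"
    have "Psi ?F g J = (\<Sum>r\<in>{1..J}. (-1) ^ (r - 1) * Psi ?F (g @ [r]) (J - r))"
      using Suc by simp
    also have "\<dots> = (\<Sum>r\<in>{1..J}. (-1) ^ (r - 1) * (\<Sum>mu\<in>UL lam. int (?C mu r) * int (KR mu (rev g))))"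
    proof (rule sum.cong[OF refl])
      fix r assume r: "r \<in> {1..J}"
      have "Psi ?F (g @ [r]) (J - r) = (\<Sum>mu'\<in>VS lam (J - r). int (KR mu' (rev (g @ [r]))))"
        using r by (intro less.IH) auto
      also have "\<dots> = (\<Sum>mu'\<in>VS lam (J - r). \<Sum>mu\<in>HS mu' r. int (KR mu (rev g)))"
        by (simp add: of_nat_sum)
      also have "\<dots> = (\<Sum>mu\<in>UL lam. of_nat (?C mu r) * int (KR mu (rev g)))"
        by (rule sum_swap_count[OF finite_VS finite_UL HS_sub_UL])
      finally show "(-1) ^ (r - 1) * Psi ?F (g @ [r]) (J - r) = (-1) ^ (r - 1) * (\<Sum>mu\<in>UL lam. int (?C mu r) * int (KR mu (rev g)))"
        by simp
    qed
    also have "\<dots> = (\<Sum>r\<in>{1..J}. \<Sum>mu\<in>UL lam. int (KR mu (rev g)) * ((-1) ^ (r - 1) * int (?C mu r)))"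
      by (simp add: sum_distrib_left mult_ac)
    also have "\<dots> = (\<Sum>mu\<in>UL lam. \<Sum>r\<in>{1..J}. int (KR mu (rev g)) * ((-1) ^ (r - 1) * int (?C mu r)))"
      by (rule sum.swap)
    also have "\<dots> = (\<Sum>mu\<in>UL lam. if mu \<in> VS lam J then int (KR mu (rev g)) else 0)"
    proof (rule sum.cong[OF refl])
      fix mu assume muU: "mu \<in> UL lam"
      show "(\<Sum>r\<in>{1..J}. int (KR mu (rev g)) * ((-1) ^ (r - 1) * int (?C mu r))) = (if mu \<in> VS lam J then int (KR mu (rev g)) else 0)"
      proof (cases "KR mu (rev g) = 0")
        case True then show ?thesis by simp
      next
        case False
        have hs: "hstrip mu mu" by (rule sorted_hstrip_self[OF KR_sorted[OF False]])
        have lm: "length mu = length lam" using muU by (simp add: UL_def)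
        show ?thesis
        proof (cases "sum_list lam = sum_list mu + J")
          case True
          have C: "?C mu r = cnt mu lam r" if "r \<in> {1..J}" for r
          proof -
            have "{mu' \<in> VS lam (J - r). mu \<in> HS mu' r} = {x \<in> XS mu lam. sum_list x = sum_list mu + r}"
              using that True by (auto simp: VS_def HS_def XS_def)
            then show ?thesis by (simp add: cnt_def)
          qed
          have "(\<Sum>r\<in>{1..J}. int (KR mu (rev g)) * ((-1) ^ (r - 1) * int (?C mu r))) = int (KR mu (rev g)) * (\<Sum>r\<in>{1..J}. (-1) ^ (r - 1) * int (cnt mu lam r))"
            using C by (simp add: sum_distrib_left)
          also have "\<dots> = int (KR mu (rev g)) * (if hstrip mu mu \<and> vs mu lam then 1 else 0)"
            using W_eq[OF s lm True] Suc by simp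
          finally show ?thesis using hs True by (simp add: VS_def)
        next
          case False
          have "?C mu r = 0" if "r \<in> {1..J}" for r
          proof -
            have e: "{mu' \<in> VS lam (J - r). mu \<in> HS mu' r} = {}"
              using that False by (auto simp: VS_def HS_def)
            show ?thesis unfolding e by simp
          qed
          then show ?thesis using False by (simp add: VS_def)
        qed
      qed
    qed
    also have "\<dots> = (\<Sum>mu\<in>VS lam J. int (KR mu (rev g)))"
      using VS_UL finite_UL by (simp add: sum.If_cases Int_absorb1)
    finally show ?thesis .
  qed
qed


definition cS :: "(nat \<Rightarrow> nat) set \<Rightarrow> nat \<Rightarrow> nat" where
  "cS S i = (\<Sum>\<alpha>\<in>S. \<alpha> i)"

definition cQ :: "(nat \<Rightarrow> nat) multiset \<Rightarrow> nat \<Rightarrow> nat" where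
  "cQ Q i = sum_mset (image_mset (\<lambda>\<alpha>. \<alpha> i) Q)"

definition cont :: "(nat \<Rightarrow> nat) set \<times> (nat \<Rightarrow> nat) multiset \<Rightarrow> nat \<Rightarrow> nat" where
  "cont p i = cS (fst p) i + cQ (snd p) i"

definition Obj :: "nat \<Rightarrow> nat list \<Rightarrow> nat \<Rightarrow> ((nat \<Rightarrow> nat) set \<times> (nat \<Rightarrow> nat) multiset) set" where
  "Obj n g j = {p. finite (fst p) \<and> card (fst p) + size (snd p) = n \<and> size (snd p) = j \<and> (\<forall>i. cont p i = at g i)}"

definition YY :: "nat \<Rightarrow> nat list \<Rightarrow> nat \<Rightarrow> ((nat \<Rightarrow> nat) set \<times> (nat \<Rightarrow> nat) multiset) set" where
  "YY n g J = {p. finite (fst p) \<and> card (fst p) + size (snd p) = n \<and>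
      (\<forall>i. i \<noteq> length g \<longrightarrow> cont p i = at g i) \<and> size (snd p) + cont p (length g) = J}"

lemma cQ_add: "cQ (add_mset a Q) i = a i + cQ Q i"
  by (simp add: cQ_def)

lemma cQ_empty: "cQ {#} i = 0"
  by (simp add: cQ_def)

lemma cS_insert: "finite S \<Longrightarrow> a \<notin> S \<Longrightarrow> cS (insert a S) i = a i + cS S i"
  by (simp add: cS_def)

lemma le_cS: "finite S \<Longrightarrow> a \<in> S \<Longrightarrow> a i \<le> cS S i"
  unfolding cS_def by (rule member_le_sum) auto

lemma le_cQ: "a \<in># Q \<Longrightarrow> a i \<le> cQ Q i"
proof -
  assume "a \<in># Q"
  then obtain Q0 where "Q = add_mset a Q0" by (metis insert_DiffM)
  then show ?thesis by (simp add: cQ_add)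
qed

lemma finite_mon: "finite {\<alpha>::nat\<Rightarrow>nat. \<forall>i. \<alpha> i \<le> at h i}"
proof -
  have "{\<alpha>::nat\<Rightarrow>nat. \<forall>i. \<alpha> i \<le> at h i} \<subseteq> {f. \<forall>x. (x \<in> {..<length h} \<longrightarrow> f x \<in> {..sum_list h}) \<and> (x \<notin> {..<length h} \<longrightarrow> f x = 0)}"
  proof (clarsimp, intro conjI allI impI)
    fix \<alpha> :: "nat \<Rightarrow> nat" and x assume a: "\<forall>i. \<alpha> i \<le> at h i"
    show "\<alpha> x \<le> sum_list h" using a[rule_format, of x] at_le_sum[of h x] by simp
    assume "\<not> x < length h"
    then show "\<alpha> x = 0" using a[rule_format, of x] by (simp add: at_def)
  qed
  moreover have "finite {f. \<forall>x. (x \<in> {..<length h} \<longrightarrow> f x \<in> {..sum_list h}) \<and> (x \<notin> {..<length h} \<longrightarrow> f (x::nat) = (0::nat))}"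
    by (rule finite_set_of_finite_funs) auto
  ultimately show ?thesis by (rule finite_subset)
qed

lemma finite_msets: "finite A \<Longrightarrow> finite {Q. set_mset Q \<subseteq> A \<and> size Q \<le> k}"
proof -
  assume fA: "finite A"
  have "{Q. set_mset Q \<subseteq> A \<and> size Q \<le> k} \<subseteq> mset ` {xs. set xs \<subseteq> A \<and> length xs \<le> k}"
  proof
    fix Q assume Q: "Q \<in> {Q. set_mset Q \<subseteq> A \<and> size Q \<le> k}"
    obtain xs where xs: "mset xs = Q" using ex_mset by blast
    then show "Q \<in> mset ` {xs. set xs \<subseteq> A \<and> length xs \<le> k}" using Q by auto
  qed
  moreover have "finite (mset ` {xs. set xs \<subseteq> A \<and> length xs \<le> k})"
    by (rule finite_imageI) (rule finite_lists_length_le[OF fA])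
  ultimately show ?thesis by (rule finite_subset)
qed

lemma finite_SQ: "finite {p. finite (fst p) \<and> size (snd p) \<le> k \<and> (\<forall>i. cont p i \<le> at h i)}"
proof -
  let ?M = "{\<alpha>::nat\<Rightarrow>nat. \<forall>i. \<alpha> i \<le> at h i}"
  have "{p. finite (fst p) \<and> size (snd p) \<le> k \<and> (\<forall>i. cont p i \<le> at h i)} \<subseteq> Pow ?M \<times> {Q. set_mset Q \<subseteq> ?M \<and> size Q \<le> k}"
  proof (clarsimp simp: cont_def, intro conjI)
    fix S Q assume f: "finite S" and sz: "size Q \<le> k" and c: "\<forall>i. cS S i + cQ Q i \<le> at h i"
    show "S \<subseteq> ?M"
    proof
      fix a assume "a \<in> S"
      then have X: "a i \<le> cS S i" for i using le_cS[OF f] by blast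
      have "a i \<le> at h i" for i using X[of i] c[rule_format, of i] by linarith
      then show "a \<in> ?M" by simp
    qed
    show "set_mset Q \<subseteq> ?M"
    proof
      fix a assume "a \<in># Q"
      then have X: "a i \<le> cQ Q i" for i using le_cQ by blast
      have "a i \<le> at h i" for i using X[of i] c[rule_format, of i] by linarith
      then show "a \<in> ?M" by simp
    qed
  qed
  moreover have "finite (Pow ?M \<times> {Q. set_mset Q \<subseteq> ?M \<and> size Q \<le> k})"
    using finite_mon finite_msets[OF finite_mon] by blast
  ultimately show ?thesis by (rule finite_subset)
qed

lemma finite_Obj: "finite (Obj n g j)"
  by (rule finite_subset[OF _ finite_SQ[of j g]]) (auto simp: Obj_def)

lemma finite_YY: "finite (YY n g J)"
proof (rule finite_subset[OF _ finite_SQ[of J "g @ [J]"]])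
  show "YY n g J \<subseteq> {p. finite (fst p) \<and> size (snd p) \<le> J \<and> (\<forall>i. cont p i \<le> at (g @ [J]) i)}"
  proof
    fix p assume p: "p \<in> YY n g J"
    then have a: "\<forall>i. i \<noteq> length g \<longrightarrow> cont p i = at g i" "size (snd p) + cont p (length g) = J" "finite (fst p)"
      by (auto simp: YY_def)
    have "cont p i \<le> at (g @ [J]) i" for i
      using a by (cases "i = length g") (auto simp: at_snoc_ne at_snoc_eq)
    then show "p \<in> {p. finite (fst p) \<and> size (snd p) \<le> J \<and> (\<forall>i. cont p i \<le> at (g @ [J]) i)}"
      using a by auto
  qed
qed

definition keys :: "nat \<Rightarrow> (nat \<Rightarrow> nat) set \<times> (nat \<Rightarrow> nat) multiset \<Rightarrow> (nat \<Rightarrow> nat) set" where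
  "keys l p = (\<lambda>\<alpha>. \<alpha>(l := \<alpha> l - 1)) ` {\<alpha>\<in>fst p. 0 < \<alpha> l} \<union> set_mset (snd p)"

definition up :: "nat \<Rightarrow> (nat \<Rightarrow> nat) \<Rightarrow> nat \<Rightarrow> nat" where
  "up l k = k(l := Suc (k l))"

definition flip :: "nat \<Rightarrow> (nat \<Rightarrow> nat) set \<times> (nat \<Rightarrow> nat) multiset \<Rightarrow> (nat \<Rightarrow> nat) set \<times> (nat \<Rightarrow> nat) multiset" where
  "flip l p = (let k = (SOME k. k \<in> keys l p) in
     if up l k \<in> fst p then (fst p - {up l k}, add_mset k (snd p)) else (insert (up l k) (fst p), snd p - {#k#}))"

lemma up_down: "0 < \<alpha> l \<Longrightarrow> up l (\<alpha>(l := \<alpha> l - 1)) = \<alpha>"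
  by (auto simp: up_def fun_eq_iff)

lemma down_up: "(up l k)(l := up l k l - 1) = k"
  by (auto simp: up_def fun_eq_iff)

lemma up_pos: "0 < up l k l"
  by (simp add: up_def)

lemma up_at: "up l k i = k i + (if i = l then 1 else 0)"
  by (simp add: up_def)


lemma exch_keys:
  assumes "up l k \<notin> S0"
  shows "keys l (insert (up l k) S0, Q) = keys l (S0, add_mset k Q)"
proof -
  have "{\<alpha>\<in>insert (up l k) S0. 0 < \<alpha> l} = insert (up l k) {\<alpha>\<in>S0. 0 < \<alpha> l}"
    using up_pos[of l k] by auto
  then have "(\<lambda>\<alpha>. \<alpha>(l := \<alpha> l - 1)) ` {\<alpha>\<in>insert (up l k) S0. 0 < \<alpha> l} = insert k ((\<lambda>\<alpha>. \<alpha>(l := \<alpha> l - 1)) ` {\<alpha>\<in>S0. 0 < \<alpha> l})"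
    using down_up[of l k] by simp
  then show ?thesis by (auto simp: keys_def)
qed

lemma exch_cont:
  assumes "finite S0" "up l k \<notin> S0"
  shows "cont (insert (up l k) S0, Q) i = cont (S0, add_mset k Q) i + (if i = l then 1 else 0)"
  using assms by (simp add: cont_def cS_insert cQ_add up_at)

lemma exch_card:
  assumes "finite S0" "up l k \<notin> S0"
  shows "card (insert (up l k) S0) + size Q = card S0 + size (add_mset k Q)"
  using assms by simp

lemma exch_YY:
  assumes "finite S0" "up (length g) k \<notin> S0"
  shows "(insert (up (length g) k) S0, Q) \<in> YY n g J \<longleftrightarrow> (S0, add_mset k Q) \<in> YY n g J"
proof -
  have c: "cont (insert (up (length g) k) S0, Q) i = cont (S0, add_mset k Q) i + (if i = length g then 1 else 0)" for i
    by (rule exch_cont[OF assms])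
  show ?thesis using assms c by (auto simp: YY_def)
qed

lemma flip_invol:
  assumes p: "p \<in> YY n g J" and J: "1 \<le> J"
  shows "flip (length g) p \<in> YY n g J \<and> flip (length g) (flip (length g) p) = p \<and>
         (-1::int) ^ (cont (flip (length g) p) (length g)) = - ((-1) ^ (cont p (length g)))"
proof -
  let ?l = "length g"
  obtain S Q where pSQ: "p = (S, Q)" by (cases p)
  have fin: "finite S" and szJ: "size Q + cont p ?l = J" using p pSQ by (auto simp: YY_def)
  have ne: "keys ?l p \<noteq> {}"
  proof (cases "Q = {#}")
    case False
    then obtain q where "q \<in># Q" by (meson multiset_nonemptyE)
    then show ?thesis using pSQ by (auto simp: keys_def)
  next
    case True
    then have "cS S ?l \<noteq> 0" using szJ J pSQ by (simp add: cont_def cQ_empty)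
    then obtain \<alpha> where "\<alpha> \<in> S" "0 < \<alpha> ?l" unfolding cS_def
      by (metis (no_types, lifting) gr0I sum.neutral)
    then show ?thesis using pSQ by (auto simp: keys_def)
  qed
  define k where "k = (SOME k. k \<in> keys ?l p)"
  have kin: "k \<in> keys ?l p" unfolding k_def using ne by (simp add: some_in_eq)
  have fl: "flip ?l q = (if up ?l k \<in> fst q then (fst q - {up ?l k}, add_mset k (snd q)) else (insert (up ?l k) (fst q), snd q - {#k#}))"
    if "keys ?l q = keys ?l p" for q
    using that by (simp add: flip_def k_def Let_def)
  show ?thesis
  proof (cases "up ?l k \<in> S")
    case True
    define S0 where "S0 = S - {up ?l k}"
    have S: "S = insert (up ?l k) S0" and nS0: "up ?l k \<notin> S0" and f0: "finite S0"
      using True fin by (auto simp: S0_def)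
    have fp: "flip ?l p = (S0, add_mset k Q)" using fl[of p] True pSQ by (simp add: S0_def)
    have k2: "keys ?l (flip ?l p) = keys ?l p" using exch_keys[OF nS0] fp pSQ S by simp
    have Y: "flip ?l p \<in> YY n g J" using exch_YY[OF f0 nS0, of Q n J] p pSQ S fp by simp
    have ff: "flip ?l (flip ?l p) = p" using fl[OF k2] fp nS0 pSQ S by simp
    have "cont p ?l = cont (flip ?l p) ?l + 1" using exch_cont[OF f0 nS0, of Q ?l] pSQ S fp by simp
    then show ?thesis using Y ff by simp
  next
    case False
    have kQ: "k \<in># Q"
    proof (rule ccontr)
      assume "\<not> k \<in># Q"
      then obtain \<alpha> where a: "\<alpha> \<in> S" "0 < \<alpha> ?l" "k = \<alpha>(?l := \<alpha> ?l - 1)" using kin pSQ by (auto simp: keys_def)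
      then have "up ?l k = \<alpha>" using up_down by simp
      then show False using False a by simp
    qed
    define Q0 where "Q0 = Q - {#k#}"
    have Q: "Q = add_mset k Q0" using kQ by (simp add: Q0_def)
    have fp: "flip ?l p = (insert (up ?l k) S, Q0)" using fl[of p] False pSQ by (simp add: Q0_def)
    have k2: "keys ?l (flip ?l p) = keys ?l p" using exch_keys[OF False] fp pSQ Q by simp
    have Y: "flip ?l p \<in> YY n g J" using exch_YY[OF fin False, of Q0 n J] p pSQ Q fp by simp
    have ff: "flip ?l (flip ?l p) = p" using fl[OF k2] fp False pSQ Q by simp
    have "cont (flip ?l p) ?l = cont p ?l + 1" using exch_cont[OF fin False, of Q0 ?l] pSQ Q fp by simp
    then show ?thesis using Y ff by simp
  qed
qed

lemma YY_sum_zero: "1 \<le> J \<Longrightarrow> (\<Sum>p\<in>YY n g J. (-1::int) ^ cont p (length g)) = 0"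
  by (rule invol_sum_zero[where sg = "flip (length g)"]) (use finite_YY flip_invol in auto)

lemma YY_fiber: "r \<le> J \<Longrightarrow> {p \<in> YY n g J. cont p (length g) = r} = Obj n (g @ [r]) (J - r)"
proof -
  assume r: "r \<le> J"
  have "p \<in> YY n g J \<and> cont p (length g) = r \<longleftrightarrow> p \<in> Obj n (g @ [r]) (J - r)" for p
  proof
    assume a: "p \<in> YY n g J \<and> cont p (length g) = r"
    have "cont p i = at (g @ [r]) i" for i
      using a by (cases "i = length g") (auto simp: YY_def at_snoc_ne at_snoc_eq)
    then show "p \<in> Obj n (g @ [r]) (J - r)" using a by (auto simp: YY_def Obj_def)
  next
    assume a: "p \<in> Obj n (g @ [r]) (J - r)"
    then have c: "cont p i = at (g @ [r]) i" for i by (simp add: Obj_def)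
    have "cont p (length g) = r" using c[of "length g"] by (simp add: at_snoc_eq)
    moreover have "\<forall>i. i \<noteq> length g \<longrightarrow> cont p i = at g i" using c by (simp add: at_snoc_ne)
    ultimately show "p \<in> YY n g J \<and> cont p (length g) = r" using a r by (auto simp: YY_def Obj_def)
  qed
  then show ?thesis by blast
qed

lemma at_snoc0: "at (g @ [0]) = at g"
  by (auto simp: at_def nth_append fun_eq_iff)

lemma Obj_alt: "1 \<le> J \<Longrightarrow> int (card (Obj n g J)) = (\<Sum>r\<in>{1..J}. (-1) ^ (r - 1) * int (card (Obj n (g @ [r]) (J - r))))"
proof -
  assume J: "1 \<le> J"
  let ?c = "\<lambda>p. cont p (length g)"
  have rng: "?c ` YY n g J \<subseteq> {0..J}" by (auto simp: YY_def)
  have "(0::int) = (\<Sum>p\<in>YY n g J. (-1::int) ^ ?c p)" using YY_sum_zero[OF J] by simp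
  also have "\<dots> = (\<Sum>r\<in>{0..J}. \<Sum>p\<in>{p \<in> YY n g J. ?c p = r}. (-1::int) ^ ?c p)"
    by (rule sum.group[symmetric]) (use finite_YY rng in auto)
  also have "\<dots> = (\<Sum>r\<in>{0..J}. (-1) ^ r * int (card (Obj n (g @ [r]) (J - r))))"
  proof (rule sum.cong[OF refl])
    fix r assume r: "r \<in> {0..J}"
    have "(\<Sum>p\<in>{p \<in> YY n g J. ?c p = r}. (-1::int) ^ ?c p) = (\<Sum>p\<in>{p \<in> YY n g J. ?c p = r}. (-1::int) ^ r)"
      by (rule sum.cong) auto
    also have "\<dots> = (-1) ^ r * int (card (Obj n (g @ [r]) (J - r)))"
      using YY_fiber[of r J n g] r by simp
    finally show "(\<Sum>p\<in>{p \<in> YY n g J. ?c p = r}. (-1::int) ^ ?c p) = (-1) ^ r * int (card (Obj n (g @ [r]) (J - r)))" .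
  qed
  also have "\<dots> = int (card (Obj n g J)) + (\<Sum>r\<in>{1..J}. (-1) ^ r * int (card (Obj n (g @ [r]) (J - r))))"
    by (simp add: sum.atLeast_Suc_atMost at_snoc0 Obj_def)
  finally have z: "int (card (Obj n g J)) = - (\<Sum>r\<in>{1..J}. (-1) ^ r * int (card (Obj n (g @ [r]) (J - r))))"
    by simp
  have "(\<Sum>r\<in>{1..J}. (-1) ^ (r - 1) * int (card (Obj n (g @ [r]) (J - r)))) = (\<Sum>r\<in>{1..J}. - ((-1) ^ r * int (card (Obj n (g @ [r]) (J - r)))))"
  proof (rule sum.cong[OF refl])
    fix r assume "r \<in> {1..J}"
    then obtain q where "r = Suc q" by (cases r) auto
    then show "(-1) ^ (r - 1) * int (card (Obj n (g @ [r]) (J - r))) = - ((-1) ^ r * int (card (Obj n (g @ [r]) (J - r))))" by simp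
  qed
  then show ?thesis using z by (simp add: sum_negf)
qed

lemma Psi_Obj: "Psi (\<lambda>g. int (card (Obj n g 0))) g j = int (card (Obj n g j))"
proof (induction j arbitrary: g rule: less_induct)
  case (less J)
  show ?case
  proof (cases J)
    case 0 then show ?thesis by simp
  next
    case (Suc j')
    have "Psi (\<lambda>g. int (card (Obj n g 0))) g J = (\<Sum>r\<in>{1..J}. (-1) ^ (r - 1) * Psi (\<lambda>g. int (card (Obj n g 0))) (g @ [r]) (J - r))"
      using Suc by simp
    also have "\<dots> = (\<Sum>r\<in>{1..J}. (-1) ^ (r - 1) * int (card (Obj n (g @ [r]) (J - r))))"
      by (rule sum.cong[OF refl]) (use less.IH in auto)
    also have "\<dots> = int (card (Obj n g J))" using Obj_alt[of J n g] Suc by simp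
    finally show ?thesis .
  qed
qed


lemma pleth_Obj: "pleth_en n (at g) = int (card (Obj n g 0))"
proof -
  let ?A = "{S. finite S \<and> card S = n \<and> (\<forall>\<alpha>\<in>S. fin_supp \<alpha>) \<and> (\<lambda>i. \<Sum>\<alpha>\<in>S. \<alpha> i) = at g}"
  have eq: "Obj n g 0 = (\<lambda>S. (S, {#}::(nat\<Rightarrow>nat) multiset)) ` ?A"
  proof
    show "Obj n g 0 \<subseteq> (\<lambda>S. (S, {#}::(nat\<Rightarrow>nat) multiset)) ` ?A"
    proof
      fix p assume p: "p \<in> Obj n g 0"
      obtain S Q where pSQ: "p = (S, Q)" by (cases p)
      have Q: "Q = {#}" and f: "finite S" and c: "card S = n" and ct: "\<forall>i. cS S i = at g i"
        using p pSQ by (auto simp: Obj_def cont_def cQ_empty)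
      have fs: "fin_supp \<alpha>" if a: "\<alpha> \<in> S" for \<alpha>
      proof -
        have "{i. \<alpha> i \<noteq> 0} \<subseteq> {..<length g}"
        proof
          fix i assume "i \<in> {i. \<alpha> i \<noteq> 0}"
          then have "0 < at g i" using le_cS[OF f a, of i] ct by (metis gr0I le_0_eq mem_Collect_eq)
          then show "i \<in> {..<length g}" by (simp add: at_def split: if_splits)
        qed
        then show ?thesis by (simp add: fin_supp_def finite_subset)
      qed
      have "(\<lambda>i. \<Sum>\<alpha>\<in>S. \<alpha> i) = at g" using ct by (simp add: cS_def fun_eq_iff)
      then show "p \<in> (\<lambda>S. (S, {#}::(nat\<Rightarrow>nat) multiset)) ` ?A" using pSQ Q f c fs by auto
    qed
    show "(\<lambda>S. (S, {#}::(nat\<Rightarrow>nat) multiset)) ` ?A \<subseteq> Obj n g 0"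
    proof
      fix p assume "p \<in> (\<lambda>S. (S, {#}::(nat\<Rightarrow>nat) multiset)) ` ?A"
      then obtain S where S: "S \<in> ?A" "p = (S, {#})" by blast
      then show "p \<in> Obj n g 0" by (auto simp: Obj_def cont_def cS_def cQ_empty fun_eq_iff)
    qed
  qed
  have "card (Obj n g 0) = card ?A" unfolding eq by (rule card_image) (auto intro: inj_onI)
  then show ?thesis by (simp add: pleth_en_def)
qed

lemma deg_at: "deg (at g) = sum_list g"
proof -
  have "deg (at g) = (\<Sum>i<length g. at g i)"
    unfolding deg_def by (rule sum.mono_neutral_left) (auto simp: at_def split: if_splits)
  then show ?thesis by (simp add: sum_list_at)
qed

lemma fin_supp_at: "fin_supp (at g)"
proof -
  have "{i. at g i \<noteq> 0} \<subseteq> {..<length g}" by (auto simp: at_def split: if_splits)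
  then show ?thesis by (simp add: fin_supp_def finite_subset)
qed

lemma KR_row:
  assumes A: "1 \<le> A"
  shows "KR mu [A] = (if mu = A # replicate (length mu - 1) 0 then 1 else 0)"
proof -
  let ?R = "length mu"
  have "KR mu [A] = (\<Sum>nu\<in>HS mu A. if sum_list nu = 0 then 1 else 0)" by simp
  also have "\<dots> = (\<Sum>nu\<in>{nu\<in>HS mu A. sum_list nu = 0}. 1)"
    by (rule sum.inter_filter[OF finite_HS, symmetric])
  also have "\<dots> = card {nu\<in>HS mu A. sum_list nu = 0}" by simp
  also have "{nu\<in>HS mu A. sum_list nu = 0} = (if mu = A # replicate (?R - 1) 0 then {replicate ?R 0} else {})"
  proof (cases "mu = A # replicate (?R - 1) 0")
    case True
    have "{nu\<in>HS mu A. sum_list nu = 0} = {replicate ?R 0}"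
    proof
      show "{nu\<in>HS mu A. sum_list nu = 0} \<subseteq> {replicate ?R 0}"
      proof
        fix nu assume nu: "nu \<in> {nu\<in>HS mu A. sum_list nu = 0}"
        then have "length nu = ?R" "\<forall>x\<in>set nu. x = 0" by (auto simp: HS_def hstrip_def)
        then have "nu = replicate ?R 0" by (metis replicate_length_same)
        then show "nu \<in> {replicate ?R 0}" by simp
      qed
      have "hstrip (replicate ?R 0) mu"
        unfolding hstrip_def by (subst True) (auto simp: at_def nth_Cons')
      moreover have "sum_list mu = A" by (subst True) simp
      ultimately show "{replicate ?R 0} \<subseteq> {nu\<in>HS mu A. sum_list nu = 0}" by (simp add: HS_def)
    qed
    then show ?thesis using True by simp
  next
    case False
    have "{nu\<in>HS mu A. sum_list nu = 0} = {}"
    proof (rule ccontr)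
      assume "{nu\<in>HS mu A. sum_list nu = 0} \<noteq> {}"
      then obtain nu where nu: "hstrip nu mu" "sum_list mu = sum_list nu + A" "sum_list nu = 0"
        by (auto simp: HS_def)
      have z: "at nu i = 0" for i using at_le_sum[of nu i] nu(3) by simp
      have z2: "at mu i = 0" if "1 \<le> i" for i
      proof -
        have "i = Suc (i - 1)" using that by simp
        then show ?thesis using hstrip_Suc[OF nu(1), of "i - 1"] z[of "i - 1"] by simp
      qed
      have "sum_list mu = (\<Sum>i<1. at mu i)" by (rule sum_at_zero[symmetric]) (use z2 in auto)
      then have m0: "at mu 0 = A" using nu by simp
      then have Rpos: "0 < ?R" using A by (simp add: at_def split: if_splits)
      have "mu = A # replicate (?R - 1) 0"
      proof (rule at_eq_list)
        show "length mu = length (A # replicate (?R - 1) 0)" using Rpos by simp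
        fix i show "at mu i = at (A # replicate (?R - 1) 0) i"
        proof (cases i)
          case 0 then show ?thesis using m0 Rpos by (simp add: at_def)
        next
          case (Suc i') then show ?thesis using z2[of i] by (simp add: at_def)
        qed
      qed
      then show False using False by simp
    qed
    then show ?thesis using False by simp
  qed
  finally show ?thesis by simp
qed

lemma sum_rep1[simp]: "sum_list (replicate k (Suc 0)) = k"
  by (induction k) auto

lemma sorted_rep[simp]: "sorted_wrt (\<lambda>x y. y \<le> x) (replicate k (x::nat))"
  by (induction k) auto

definition hk :: "nat \<Rightarrow> nat \<Rightarrow> nat list" where
  "hk A B = A # replicate B 1"

lemma hk_Pm: "1 \<le> A \<Longrightarrow> hk A B \<in> Pm (A + B)"
  by (auto simp: hk_def Pm_def is_partition_def sorted_wrt_append)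

lemma vs_row:
  assumes A: "1 \<le> A" and l: "l \<in> Pm (A + B)"
  shows "(A # replicate (length l - 1) 0 \<in> VS l B) \<longleftrightarrow> (l = hk A B \<or> (1 \<le> B \<and> l = hk (A + 1) (B - 1)))"
proof
  let ?R = "length l"
  let ?r = "A # replicate (?R - 1) 0"
  have pl: "is_partition l" "sum_list l = A + B" using l by (auto simp: Pm_def)
  assume r: "?r \<in> VS l B"
  then have v: "vs ?r l" and sm: "sum_list l = sum_list ?r + B" by (auto simp: VS_def)
  have R: "1 \<le> ?R" using v by (auto simp: vs_def)
  have l0: "A \<le> at l 0" "at l 0 \<le> Suc A" using v R by (auto simp: vs_def at_def)
  have li: "at l i = 1" if "1 \<le> i" "i < ?R" for i
  proof -
    have "at l i \<le> Suc (at ?r i)" using v that by (auto simp: vs_def)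
    moreover have "at ?r i = 0" using that by (auto simp: at_def nth_Cons')
    moreover have "0 < at l i" using part_at_pos[OF pl(1) that(2)] .
    ultimately show ?thesis by simp
  qed
  have leq: "l = at l 0 # replicate (?R - 1) 1"
  proof (rule at_eq_list)
    show "length l = length (at l 0 # replicate (?R - 1) 1)" using R by simp
    fix i show "at l i = at (at l 0 # replicate (?R - 1) 1) i"
    proof (cases i)
      case 0 then show ?thesis by (simp add: at_def)
    next
      case (Suc i') then show ?thesis using li[of i] R by (auto simp: at_def)
    qed
  qed
  have "sum_list l = at l 0 + (?R - 1)" by (subst leq) simp
  then have s2: "at l 0 + (?R - 1) = A + B" using pl by simp
  show "l = hk A B \<or> (1 \<le> B \<and> l = hk (A + 1) (B - 1))"
  proof (cases "at l 0 = A")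
    case True
    then have "?R - 1 = B" using s2 by simp
    then show ?thesis using leq True by (simp add: hk_def)
  next
    case False
    then have "at l 0 = Suc A" using l0 by simp
    then have "?R - 1 = B - 1" "1 \<le> B" using s2 R by auto
    then show ?thesis using leq \<open>at l 0 = Suc A\<close> by (simp add: hk_def)
  qed
next
  assume h: "l = hk A B \<or> (1 \<le> B \<and> l = hk (A + 1) (B - 1))"
  then show "A # replicate (length l - 1) 0 \<in> VS l B"
  proof
    assume "l = hk A B"
    then show ?thesis by (auto simp: VS_def vs_def hk_def at_def nth_Cons')
  next
    assume b: "1 \<le> B \<and> l = hk (A + 1) (B - 1)"
    then show ?thesis by (auto simp: VS_def vs_def hk_def at_def nth_Cons')
  qed
qed

lemma hook_sum:
  assumes A: "1 \<le> A" and exp: "schur_expansion (pleth_en n) c"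
  shows "int (card (Obj n [A] B)) = c (hk A B) + (if 1 \<le> B then c (hk (A + 1) (B - 1)) else 0)"
proof -
  have F: "pleth_en n (at g) = (\<Sum>l\<in>Pm (sum_list g). c l * int (kostka l (at g)))" for g
    using exp fin_supp_at[of g] by (simp add: schur_expansion_def deg_at Pm_def)
  have e1: "(\<lambda>g. int (card (Obj n g 0))) = (\<lambda>g. pleth_en n (at g))" by (simp add: pleth_Obj fun_eq_iff)
  have "int (card (Obj n [A] B)) = Psi (\<lambda>g. pleth_en n (at g)) [A] B"
    using Psi_Obj[of n "[A]" B] e1 by simp
  also have "\<dots> = (\<Sum>l\<in>Pm (sum_list [A] + B). c l * Psi (\<lambda>g. int (kostka l (at g))) [A] B)"
    by (rule Psi_lin[where G = "\<lambda>l g. int (kostka l (at g))"]) (rule F)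
  also have "\<dots> = (\<Sum>l\<in>Pm (A + B). c l * (if A # replicate (length l - 1) 0 \<in> VS l B then 1 else 0))"
  proof (rule sum.cong)
    show "Pm (sum_list [A] + B) = Pm (A + B)" by simp
    fix l assume l: "l \<in> Pm (A + B)"
    have s: "sorted_wrt (\<ge>) l" using l part_sorted by (auto simp: Pm_def)
    have e2: "(\<lambda>g. int (kostka l (at g))) = (\<lambda>g. int (KR l (rev g)))" using kostka_KR[OF s] by simp
    have "Psi (\<lambda>g. int (kostka l (at g))) [A] B = (\<Sum>mu\<in>VS l B. int (KR mu (rev [A])))"
      unfolding e2 by (rule Psi_KR[OF s])
    also have "\<dots> = (\<Sum>mu\<in>VS l B. if mu = A # replicate (length l - 1) 0 then 1 else 0)"
    proof (rule sum.cong[OF refl])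
      fix mu assume "mu \<in> VS l B"
      then have "length mu = length l" by (simp add: VS_def vs_def)
      then show "int (KR mu (rev [A])) = (if mu = A # replicate (length l - 1) 0 then 1 else 0)"
        using KR_row[OF A, of mu] by simp
    qed
    also have "\<dots> = (if A # replicate (length l - 1) 0 \<in> VS l B then 1 else 0)"
      using finite_VS by (simp add: sum.delta')
    finally show "c l * Psi (\<lambda>g. int (kostka l (at g))) [A] B = c l * (if A # replicate (length l - 1) 0 \<in> VS l B then 1 else 0)"
      by simp
  qed
  also have "\<dots> = (\<Sum>l\<in>Pm (A + B). if l = hk A B \<or> (1 \<le> B \<and> l = hk (A + 1) (B - 1)) then c l else 0)"
    by (rule sum.cong[OF refl]) (use vs_row[OF A] in auto)
  also have "\<dots> = (\<Sum>l\<in>{l\<in>Pm (A + B). l = hk A B \<or> (1 \<le> B \<and> l = hk (A + 1) (B - 1))}. c l)"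
    by (rule sum.inter_filter[OF finite_Pm, symmetric])
  also have "\<dots> = c (hk A B) + (if 1 \<le> B then c (hk (A + 1) (B - 1)) else 0)"
  proof (cases "1 \<le> B")
    case True
    have "{l\<in>Pm (A + B). l = hk A B \<or> (1 \<le> B \<and> l = hk (A + 1) (B - 1))} = {hk A B, hk (A + 1) (B - 1)}"
      using hk_Pm[OF A, of B] hk_Pm[of "A + 1" "B - 1"] True by auto
    moreover have "hk A B \<noteq> hk (A + 1) (B - 1)" by (simp add: hk_def)
    ultimately show ?thesis using True by simp
  next
    case False
    have "{l\<in>Pm (A + B). l = hk A B \<or> (1 \<le> B \<and> l = hk (A + 1) (B - 1))} = {hk A B}"
      using hk_Pm[OF A, of B] False by auto
    then show ?thesis using False by simp
  qed
  finally show ?thesis .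
qed


definition NLs :: "nat \<Rightarrow> nat \<Rightarrow> nat \<Rightarrow> (nat list \<times> nat list) set" where
  "NLs n A B = {(lam, mu). length lam = B \<and> sorted_wrt (\<ge>) lam \<and> length mu = n - B \<and> sorted_wrt (>) mu
      \<and> sum_list lam + sum_list mu = A}"

definition mon :: "nat \<Rightarrow> nat \<Rightarrow> nat" where
  "mon k = (\<lambda>i. if i = 0 then k else 0)"

lemma inj_mon: "inj mon"
proof (rule injI)
  fix x y assume "mon x = mon y"
  then have "mon x 0 = mon y 0" by simp
  then show "x = y" by (simp add: mon_def)
qed

lemma mon0: "mon k 0 = k" by (simp add: mon_def)

definition Phi :: "nat list \<times> nat list \<Rightarrow> (nat \<Rightarrow> nat) set \<times> (nat \<Rightarrow> nat) multiset" where
  "Phi p = (mon ` set (snd p), mset (map mon (fst p)))"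

lemma sorted_gt_rev: "sorted_wrt (>) mu \<Longrightarrow> sorted_wrt (<) (rev mu)"
  by (simp add: sorted_wrt_rev)

lemma strict_desc_eq: "sorted_wrt (>) xs \<Longrightarrow> sorted_wrt (>) ys \<Longrightarrow> set xs = set ys \<Longrightarrow> xs = (ys::nat list)"
proof -
  assume a: "sorted_wrt (>) xs" "sorted_wrt (>) ys" "set xs = set ys"
  have b: "sorted_wrt (<) (rev xs)" "sorted_wrt (<) (rev ys)" using a by (auto simp: sorted_wrt_rev)
  then have "sorted (rev xs)" "distinct (rev xs)" "sorted (rev ys)" "distinct (rev ys)"
    using strict_sorted_iff by blast+
  moreover have "set (rev xs) = set (rev ys)" using a by simp
  ultimately have "rev xs = rev ys" by (rule sorted_distinct_set_unique)
  then show ?thesis by simp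
qed

lemma desc_mset_eq: "sorted_wrt (\<ge>) xs \<Longrightarrow> sorted_wrt (\<ge>) ys \<Longrightarrow> mset xs = mset ys \<Longrightarrow> xs = (ys::nat list)"
proof -
  assume a: "sorted_wrt (\<ge>) xs" "sorted_wrt (\<ge>) ys" "mset xs = mset ys"
  have s1: "sorted (rev xs)" "sorted (rev ys)" using a by (auto simp: sorted_wrt_rev)
  have "sort (rev ys) = rev xs" by (rule properties_for_sort) (use a s1 in auto)
  moreover have "sort (rev ys) = rev ys" by (rule sorted_sort_id[OF s1(2)])
  ultimately show ?thesis by simp
qed

lemma gt_distinct: "sorted_wrt (>) mu \<Longrightarrow> distinct (mu::nat list)"
proof -
  assume "sorted_wrt (>) mu"
  then have "sorted_wrt (<) (rev mu)" by (simp add: sorted_wrt_rev)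
  then have "distinct (rev mu)" using strict_sorted_iff by blast
  then show ?thesis by simp
qed

lemma cS_mon: "distinct mu \<Longrightarrow> cS (mon ` set mu) i = (if i = 0 then sum_list mu else 0)"
proof -
  assume d: "distinct mu"
  have "cS (mon ` set mu) i = (\<Sum>k\<in>set mu. mon k i)"
    unfolding cS_def by (rule sum.reindex_cong[OF inj_on_subset[OF inj_mon]]) auto
  also have "\<dots> = (if i = 0 then sum_list mu else 0)"
    using d by (simp add: mon_def sum_list_distinct_conv_sum_set[symmetric])
  finally show ?thesis .
qed

lemma cQ_mon: "cQ (image_mset mon (mset lam)) i = (if i = 0 then sum_list lam else 0)"
  by (induction lam) (auto simp: cQ_def mon_def)

lemma mon_back: "image_mset (\<lambda>\<alpha>. \<alpha> 0) (image_mset mon (mset xs)) = mset xs"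
  by (induction xs) (auto simp: mon0)

lemma len_slm: "length (sorted_list_of_multiset M) = size M"
  by (metis mset_sorted_list_of_multiset size_mset)

lemma Phi_inj: "inj_on Phi (NLs n A B)"
proof (rule inj_onI)
  fix p q assume p: "p \<in> NLs n A B" and q: "q \<in> NLs n A B" and e: "Phi p = Phi q"
  obtain lam mu where pp: "p = (lam, mu)" by (cases p)
  obtain lam' mu' where qq: "q = (lam', mu')" by (cases q)
  have "mon ` set mu = mon ` set mu'" using e pp qq by (simp add: Phi_def)
  then have "set mu = set mu'" using inj_mon by (simp add: inj_image_eq_iff)
  then have m: "mu = mu'" using p q pp qq strict_desc_eq by (auto simp: NLs_def)
  have "mset (map mon lam) = mset (map mon lam')" using e pp qq by (simp add: Phi_def)
  then have "image_mset (\<lambda>\<alpha>. \<alpha> 0) (image_mset mon (mset lam)) = image_mset (\<lambda>\<alpha>. \<alpha> 0) (image_mset mon (mset lam'))" by simp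
  then have "mset lam = mset lam'" by (simp only: mon_back)
  then have "lam = lam'" using p q pp qq desc_mset_eq by (auto simp: NLs_def)
  then show "p = q" using m pp qq by simp
qed

lemma Phi_in: "B \<le> n \<Longrightarrow> p \<in> NLs n A B \<Longrightarrow> Phi p \<in> Obj n [A] B"
proof -
  assume B: "B \<le> n" and p: "p \<in> NLs n A B"
  obtain lam mu where pp: "p = (lam, mu)" by (cases p)
  have l: "length lam = B" "length mu = n - B" "sorted_wrt (>) mu" "sum_list lam + sum_list mu = A"
    using p pp by (auto simp: NLs_def)
  have d: "distinct mu" by (rule gt_distinct[OF l(3)])
  have "card (mon ` set mu) = n - B"
    using card_image[OF inj_on_subset[OF inj_mon]] distinct_card[OF d] l(2) by simp
  moreover have "cont (Phi p) i = at [A] i" for i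
    using l(4) d pp by (auto simp: Phi_def cont_def cS_mon cQ_mon at_def)
  ultimately show ?thesis using B l(1) pp by (auto simp: Obj_def Phi_def)
qed

lemma Obj_mon:
  assumes p: "p \<in> Obj n [A] B"
  shows "\<forall>\<alpha>\<in>fst p. \<alpha> = mon (\<alpha> 0)" "\<forall>\<alpha>\<in>#snd p. \<alpha> = mon (\<alpha> 0)"
proof -
  have f: "finite (fst p)" and c: "\<forall>i. cont p i = at [A] i" using p by (auto simp: Obj_def)
  have z: "cont p i = 0" if "i \<noteq> 0" for i using c that by (simp add: at_def)
  show "\<forall>\<alpha>\<in>fst p. \<alpha> = mon (\<alpha> 0)"
  proof
    fix \<alpha> assume a: "\<alpha> \<in> fst p"
    have "\<alpha> i = 0" if "i \<noteq> 0" for i using le_cS[OF f a, of i] z[OF that] by (simp add: cont_def)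
    then show "\<alpha> = mon (\<alpha> 0)" by (auto simp: mon_def fun_eq_iff)
  qed
  show "\<forall>\<alpha>\<in>#snd p. \<alpha> = mon (\<alpha> 0)"
  proof
    fix \<alpha> assume a: "\<alpha> \<in># snd p"
    have "\<alpha> i = 0" if "i \<noteq> 0" for i using le_cQ[OF a, of i] z[OF that] by (simp add: cont_def)
    then show "\<alpha> = mon (\<alpha> 0)" by (auto simp: mon_def fun_eq_iff)
  qed
qed

lemma Phi_surj:
  assumes p: "p \<in> Obj n [A] B"
  shows "p \<in> Phi ` NLs n A B"
proof -
  obtain S Q where pp: "p = (S, Q)" by (cases p)
  have f: "finite S" and cd: "card S + size Q = n" and sz: "size Q = B" and c: "\<forall>i. cont p i = at [A] i"
    using p pp by (auto simp: Obj_def)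
  have mS: "\<forall>\<alpha>\<in>S. \<alpha> = mon (\<alpha> 0)" and mQ: "\<forall>\<alpha>\<in>#Q. \<alpha> = mon (\<alpha> 0)" using Obj_mon[OF p] pp by auto
  define K where "K = (\<lambda>\<alpha>. \<alpha> 0) ` S"
  define mu where "mu = rev (sorted_list_of_set K)"
  define lam where "lam = rev (sorted_list_of_multiset (image_mset (\<lambda>\<alpha>. \<alpha> 0) Q))"
  have fK: "finite K" using f by (simp add: K_def)
  have inj0: "inj_on (\<lambda>\<alpha>. \<alpha> 0) S"
  proof (rule inj_onI)
    fix x y assume "x \<in> S" "y \<in> S" "x 0 = y 0"
    then show "x = y" using mS by metis
  qed
  have setmu: "set mu = K" using fK by (simp add: mu_def)
  have smu: "sorted_wrt (>) mu" using fK
    by (simp add: mu_def sorted_wrt_rev strict_sorted_list_of_set)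
  have dmu: "distinct mu" using fK by (simp add: mu_def)
  have lmu: "length mu = n - B"
  proof -
    have "length mu = card K" using fK by (simp add: mu_def)
    also have "\<dots> = card S" using card_image[OF inj0] by (simp add: K_def)
    finally show ?thesis using cd sz by simp
  qed
  have mlam: "mset lam = image_mset (\<lambda>\<alpha>. \<alpha> 0) Q" by (simp add: lam_def)
  have llam: "length lam = B" using sz by (simp add: lam_def len_slm)
  have slam: "sorted_wrt (\<ge>) lam" by (simp add: lam_def sorted_wrt_rev)
  have S: "mon ` set mu = S"
  proof -
    have "mon ` set mu = mon ` (\<lambda>\<alpha>. \<alpha> 0) ` S" by (simp add: setmu K_def)
    also have "\<dots> = (\<lambda>\<alpha>. mon (\<alpha> 0)) ` S" by (simp add: image_image)
    also have "\<dots> = (\<lambda>\<alpha>. \<alpha>) ` S" by (rule image_cong) (use mS in auto)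
    finally show ?thesis by simp
  qed
  have Q: "mset (map mon lam) = Q"
  proof -
    have "mset (map mon lam) = image_mset mon (image_mset (\<lambda>\<alpha>. \<alpha> 0) Q)" by (simp add: mlam)
    also have "\<dots> = image_mset (\<lambda>\<alpha>. mon (\<alpha> 0)) Q" by (simp add: image_mset.compositionality comp_def)
    also have "\<dots> = image_mset (\<lambda>\<alpha>. \<alpha>) Q" by (rule image_mset_cong) (use mQ in auto)
    finally show ?thesis by simp
  qed
  have sums: "sum_list lam + sum_list mu = A"
  proof -
    have "sum_list mu = cS S 0" using cS_mon[OF dmu, of 0] S by simp
    moreover have "sum_list lam = cQ Q 0" using cQ_mon[of lam 0] Q by simp
    moreover have "cS S 0 + cQ Q 0 = A" using c pp by (auto simp: cont_def at_def)
    ultimately show ?thesis by simp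
  qed
  have "(lam, mu) \<in> NLs n A B" using llam slam lmu smu sums by (simp add: NLs_def)
  moreover have "Phi (lam, mu) = p" using S Q pp by (simp add: Phi_def)
  ultimately show ?thesis by (metis image_eqI)
qed

lemma card_Obj_NLs: "B \<le> n \<Longrightarrow> card (Obj n [A] B) = card (NLs n A B)"
proof -
  assume B: "B \<le> n"
  have "Obj n [A] B = Phi ` NLs n A B" using Phi_in[OF B] Phi_surj by blast
  then show ?thesis using card_image[OF Phi_inj] by simp
qed


lemma finite_NLs: "finite (NLs n A B)"
proof -
  have "NLs n A B \<subseteq> {xs. set xs \<subseteq> {0..A} \<and> length xs \<le> B} \<times> {xs. set xs \<subseteq> {0..A} \<and> length xs \<le> n}"
  proof
    fix p assume p: "p \<in> NLs n A B"
    obtain lam mu where pp: "p = (lam, mu)" by (cases p)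
    have a: "sum_list lam + sum_list mu = A" "length lam = B" "length mu = n - B" using p pp by (auto simp: NLs_def)
    have "set lam \<subseteq> {0..A}" using a member_le_sum_list[of _ lam] by fastforce
    moreover have "set mu \<subseteq> {0..A}" using a member_le_sum_list[of _ mu] by fastforce
    ultimately show "p \<in> {xs. set xs \<subseteq> {0..A} \<and> length xs \<le> B} \<times> {xs. set xs \<subseteq> {0..A} \<and> length xs \<le> n}"
      using pp a by auto
  qed
  moreover have "finite ({xs. set xs \<subseteq> {0..A} \<and> length xs \<le> B} \<times> {xs. set xs \<subseteq> {0..A} \<and> length xs \<le> n})"
    using finite_lists_length_le[of "{0..A}"] by blast
  ultimately show ?thesis by (rule finite_subset)
qed

lemma hp0: "hook_pairs a 0 n = NLs n (a + 1) 0"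
  by (auto simp: hook_pairs_def NLs_def)

lemma hp_sub: "hook_pairs a b n = {p \<in> NLs n (a + 1) b. b = 0 \<or> hd (fst p) < hd (snd p)}"
  by (auto simp: hook_pairs_def NLs_def)

definition psi :: "nat list \<times> nat list \<Rightarrow> nat list \<times> nat list" where
  "psi p = (tl (fst p), Suc (hd (fst p)) # snd p)"

definition psi' :: "nat list \<times> nat list \<Rightarrow> nat list \<times> nat list" where
  "psi' q = ((hd (snd q) - 1) # fst q, tl (snd q))"

lemma psi_maps:
  assumes b: "1 \<le> b" "b + 1 \<le> n" and p: "p \<in> {p \<in> NLs n (a + 1) b. \<not> hd (fst p) < hd (snd p)}"
  shows "psi p \<in> hook_pairs (a + 1) (b - 1) n \<and> psi' (psi p) = p"
proof -
  obtain lam mu where pp: "p = (lam, mu)" by (cases p)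
  have l: "length lam = b" "sorted_wrt (\<ge>) lam" "length mu = n - b" "sorted_wrt (>) mu"
    "sum_list lam + sum_list mu = a + 1" "\<not> hd lam < hd mu"
    using p pp by (auto simp: NLs_def)
  obtain x xs where lx: "lam = x # xs" using l(1) b by (cases lam) auto
  obtain y ys where my: "mu = y # ys" using l(3) b by (cases mu) auto
  have xs: "\<forall>z\<in>set xs. z \<le> x" "sorted_wrt (\<ge>) xs" using l(2) lx by auto
  have ys: "\<forall>z\<in>set ys. z < y" "sorted_wrt (>) ys" using l(4) my by auto
  have yx: "y \<le> x" using l(6) lx my by simp
  have ps: "psi p = (xs, Suc x # y # ys)" using pp lx my by (simp add: psi_def)
  have c1: "b - 1 = 0 \<or> hd xs < Suc x"
  proof (cases xs)
    case Nil then show ?thesis using l(1) lx by simp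
  next
    case (Cons z zs) then show ?thesis using xs(1) by simp
  qed
  have "psi p \<in> hook_pairs (a + 1) (b - 1) n"
    unfolding ps hook_pairs_def using l lx my xs ys yx c1 b by auto
  moreover have "psi' (psi p) = p" using ps pp lx my by (simp add: psi'_def)
  ultimately show ?thesis by simp
qed

lemma psi'_maps:
  assumes b: "1 \<le> b" "b + 1 \<le> n" and q: "q \<in> hook_pairs (a + 1) (b - 1) n"
  shows "psi' q \<in> {p \<in> NLs n (a + 1) b. \<not> hd (fst p) < hd (snd p)} \<and> psi (psi' q) = q"
proof -
  obtain lam mu where qq: "q = (lam, mu)" by (cases q)
  have l: "length lam = b - 1" "sorted_wrt (\<ge>) lam" "length mu = n - (b - 1)" "sorted_wrt (>) mu"
    "sum_list lam + sum_list mu = a + 1 + 1" "b - 1 = 0 \<or> hd lam < hd mu"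
    using q qq by (auto simp: hook_pairs_def)
  have "2 \<le> length mu" using l(3) b by simp
  then obtain y0 y1 ys where my: "mu = y0 # y1 # ys" by (metis Suc_le_length_iff numeral_2_eq_2)
  have ys: "y1 < y0" "\<forall>z\<in>set ys. z < y1" "sorted_wrt (>) ys" using l(4) my by auto
  have lam_le: "\<forall>z\<in>set lam. z \<le> y0 - 1"
  proof (cases lam)
    case Nil then show ?thesis by simp
  next
    case (Cons h t)
    then have "h < y0" using l(6) l(1) my by auto
    moreover have "\<forall>z\<in>set t. z \<le> h" using l(2) Cons by auto
    ultimately show ?thesis using Cons by auto
  qed
  have ps: "psi' q = ((y0 - 1) # lam, y1 # ys)" using qq my by (simp add: psi'_def)
  have "psi' q \<in> {p \<in> NLs n (a + 1) b. \<not> hd (fst p) < hd (snd p)}"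
    unfolding ps NLs_def using l my ys lam_le b by auto
  moreover have "psi (psi' q) = q" using ps qq my ys by (simp add: psi_def)
  ultimately show ?thesis by simp
qed

lemma hp_split:
  assumes b: "1 \<le> b" "b + 1 \<le> n"
  shows "card (NLs n (a + 1) b) = card (hook_pairs a b n) + card (hook_pairs (a + 1) (b - 1) n)"
proof -
  let ?C = "{p \<in> NLs n (a + 1) b. \<not> hd (fst p) < hd (snd p)}"
  have un: "NLs n (a + 1) b = hook_pairs a b n \<union> ?C" using b by (auto simp: hp_sub)
  have dj: "hook_pairs a b n \<inter> ?C = {}" using b by (auto simp: hp_sub)
  have fin: "finite (hook_pairs a b n)" "finite ?C"
    using finite_NLs[of n "a + 1" b] by (auto simp: hp_sub)
  have "bij_betw psi ?C (hook_pairs (a + 1) (b - 1) n)"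
  proof (rule bij_betw_byWitness[where f' = psi'])
    show "\<forall>p\<in>?C. psi' (psi p) = p" using psi_maps[OF b] by blast
    show "\<forall>q\<in>hook_pairs (a + 1) (b - 1) n. psi (psi' q) = q" using psi'_maps[OF b] by blast
    show "psi ` ?C \<subseteq> hook_pairs (a + 1) (b - 1) n" using psi_maps[OF b] by blast
    show "psi' ` hook_pairs (a + 1) (b - 1) n \<subseteq> ?C" using psi'_maps[OF b] by blast
  qed
  then have "card ?C = card (hook_pairs (a + 1) (b - 1) n)" by (rule bij_betw_same_card)
  moreover have "card (hook_pairs a b n \<union> ?C) = card (hook_pairs a b n) + card ?C"
    by (rule card_Un_disjoint[OF fin dj])
  moreover have "card (NLs n (a + 1) b) = card (hook_pairs a b n \<union> ?C)"
    using un by (rule arg_cong)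
  ultimately show ?thesis by simp
qed

lemma coeff_hook:
  assumes exp: "schur_expansion (pleth_en n) c"
  shows "b + 1 \<le> n \<Longrightarrow> c (hk (a + 1) b) = int (card (hook_pairs a b n))"
proof (induction b arbitrary: a)
  case 0
  have "int (card (Obj n [a + 1] 0)) = c (hk (a + 1) 0)" using hook_sum[OF _ exp, of "a + 1" 0] by simp
  moreover have "card (Obj n [a + 1] 0) = card (hook_pairs a 0 n)"
    using card_Obj_NLs[of 0 n "a + 1"] by (simp add: hp0)
  ultimately show ?case by simp
next
  case (Suc b)
  have h: "int (card (Obj n [a + 1] (Suc b))) = c (hk (a + 1) (Suc b)) + c (hk (a + 1 + 1) b)"
    using hook_sum[OF _ exp, of "a + 1" "Suc b"] by simp
  have ih: "c (hk (a + 1 + 1) b) = int (card (hook_pairs (a + 1) b n))"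
    using Suc.IH[of "a + 1"] Suc.prems by simp
  have "card (Obj n [a + 1] (Suc b)) = card (NLs n (a + 1) (Suc b))"
    using card_Obj_NLs[of "Suc b" n "a + 1"] Suc.prems by simp
  also have "\<dots> = card (hook_pairs a (Suc b) n) + card (hook_pairs (a + 1) b n)"
    using hp_split[of "Suc b" n a] Suc.prems by simp
  finally show ?case using h ih by simp
qed

theorem corollary3p13:
  fixes a b n :: nat
  assumes "b + 1 \<le> n"
  shows "schur_coeff (pleth_en n) ((a + 1) # replicate b 1) = int (card (hook_pairs a b n))"
proof -
  obtain c0 where c0: "schur_expansion (pleth_en n) c0" using expansion_exists by blast
  have key: "c ((a + 1) # replicate b 1) = int (card (hook_pairs a b n))" if "schur_expansion (pleth_en n) c" for c
    using coeff_hook[OF that assms] by (simp add: hk_def)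
  show ?thesis unfolding schur_coeff_def
  proof (rule the_equality)
    show "\<exists>c. schur_expansion (pleth_en n) c \<and> c ((a + 1) # replicate b 1) = int (card (hook_pairs a b n))"
      using c0 key by blast
    fix x assume "\<exists>c. schur_expansion (pleth_en n) c \<and> c ((a + 1) # replicate b 1) = x"
    then show "x = int (card (hook_pairs a b n))" using key by blast
  qed
qed

end
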